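(* Let $H$ be a real Hilbert space. The set $\mathcal A=\{(B,V)\in\mathcal B_s(H)\times\mathcal G(H): B|_{V\times V}\text{ is essentially positive}\}$ is open in $\mathcal B_s(H)\times\mathcal G(H)$; the map $\mathcal A\ni(B,V)\mapsto\mathrm n_-(B|_{V\times V})+\dim\mathrm{Ker}(B|_{V\times V})\in\mathbb N$ is upper semicontinuous; and the map $\mathcal A\ni(B,V)\mapsto\mathrm n_-(B|_{V\times V})\in\mathbb N$ is lower semicontinuous.
   Context: $\mathcal B_s(H)$ is the space of bounded symmetric bilinear forms on $H$, topologized via the operator norm of the representing self-adjoint operators ($B=\langle T\cdot,\cdot\rangle$). $\mathcal G(H)$ is the set of closed subspaces of $H$ with the metric $\mathrm{dist}(X,Y)=\|P_X-P_Y\|$, $P_Z$ the orthogonal projection onto $Z$. A bounded symmetric form on a closed subspace $V$ (a Hilbert space) is essentially positive if its representing operator is $P+K$ with $P$ a self-adjoint isomorphism with $\langle Px,x\rangle>0$ for $x\neq0$ and $K$ compact. $\mathrm n_-$ is the maximal dimension of a negative definite subspace; $\mathrm{Ker}(B|_{V\times V})=\{x\in V: B(x,y)=0\ \forall y\in V\}$. *)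

theory Defs
  imports "HOL-Analysis.Analysis" "HOL-Library.Extended_Nat"
begin

text \<open>The Hilbert space H is a type of class real_inner + complete_space.
 A bounded symmetric bilinear form B is represented by its self-adjoint operator T,
 B(x,y) = inner (T x) y.\<close>

definition selfadjoint :: "('a::real_inner \<Rightarrow>\<^sub>L 'a) \<Rightarrow> bool" where
  "selfadjoint T \<longleftrightarrow> (\<forall>x y. inner (T x) y = inner x (T y))"

definition Bs :: "('a::real_inner \<Rightarrow>\<^sub>L 'a) set" where
  "Bs = {T. selfadjoint T}"

definition Gr :: "'a::real_inner set set" where
  "Gr = {V. subspace V \<and> closed V}"

definition oproj :: "'a::real_inner set \<Rightarrow> 'a \<Rightarrow> 'a" where
  "oproj V x = (THE p. p \<in> V \<and> (\<forall>v\<in>V. inner (x - p) v = 0))"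

definition gdist :: "'a::real_inner set \<Rightarrow> 'a set \<Rightarrow> real" where
  "gdist X Y = onorm (\<lambda>x. oproj X x - oproj Y x)"

text \<open>A metric inducing the product topology on B_s(H) x G(H).\<close>
definition pdist :: "('a::real_inner \<Rightarrow>\<^sub>L 'a) \<times> 'a set \<Rightarrow> ('a \<Rightarrow>\<^sub>L 'a) \<times> 'a set \<Rightarrow> real" where
  "pdist p q = norm (fst p - fst q) + gdist (snd p) (snd q)"

definition linear_on_sub :: "'a::real_vector set \<Rightarrow> ('a \<Rightarrow> 'a) \<Rightarrow> bool" where
  "linear_on_sub V f \<longleftrightarrow> (\<forall>x\<in>V. \<forall>y\<in>V. f (x + y) = f x + f y \<and> (\<forall>a. f (a *\<^sub>R x) = a *\<^sub>R f x))"

definition compact_op_on :: "'a::real_normed_vector set \<Rightarrow> ('a \<Rightarrow> 'a) \<Rightarrow> bool" where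
  "compact_op_on V K \<longleftrightarrow> linear_on_sub V K \<and> K ` V \<subseteq> V \<and>
     compact (closure (K ` (V \<inter> cball 0 1)))"

definition pos_iso_on :: "'a::real_inner set \<Rightarrow> ('a \<Rightarrow> 'a) \<Rightarrow> bool" where
  "pos_iso_on V P \<longleftrightarrow> linear_on_sub V P \<and> P ` V = V \<and>
     (\<exists>c>0. \<forall>x\<in>V. norm (P x) \<le> c * norm x \<and> norm x \<le> c * norm (P x)) \<and>
     (\<forall>x\<in>V. \<forall>y\<in>V. inner (P x) y = inner x (P y)) \<and>
     (\<forall>x\<in>V. x \<noteq> 0 \<longrightarrow> inner (P x) x > 0)"

definition ess_pos :: "('a::real_inner \<Rightarrow>\<^sub>L 'a) \<Rightarrow> 'a set \<Rightarrow> bool" where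
  "ess_pos T V \<longleftrightarrow> (\<exists>P K. pos_iso_on V P \<and> compact_op_on V K \<and>
     (\<forall>x\<in>V. \<forall>y\<in>V. inner (T x) y = inner (P x + K x) y))"

definition edim :: "'a::real_vector set \<Rightarrow> enat" where
  "edim W = Sup {enat (card S) | S. finite S \<and> independent S \<and> S \<subseteq> W}"

definition n_minus :: "('a::real_inner \<Rightarrow>\<^sub>L 'a) \<Rightarrow> 'a set \<Rightarrow> enat" where
  "n_minus T V = Sup {edim W | W. subspace W \<and> W \<subseteq> V \<and> (\<forall>x\<in>W. x \<noteq> 0 \<longrightarrow> inner (T x) x < 0)}"

definition form_ker :: "('a::real_inner \<Rightarrow>\<^sub>L 'a) \<Rightarrow> 'a set \<Rightarrow> 'a set" where
  "form_ker T V = {x \<in> V. \<forall>y\<in>V. inner (T x) y = 0}"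

definition AA :: "(('a::real_inner \<Rightarrow>\<^sub>L 'a) \<times> 'a set) set" where
  "AA = {(T, V). T \<in> Bs \<and> V \<in> Gr \<and> ess_pos T V}"

end

theory Submission
  imports Defs
begin

lemma inv_n1: "(\<lambda>n::nat. 1 / (real n + 1)) \<longlonglongrightarrow> 0"
  using LIMSEQ_inverse_real_of_nat by (simp add: inverse_eq_divide add.commute)

lemma proj_exists:
  fixes V :: "'a::{real_inner,complete_space} set"
  assumes sV: "subspace V" and cV: "closed V"
  shows "\<exists>p\<in>V. \<forall>v\<in>V. inner (x - p) v = 0"
proof -
  define D where "D = (\<lambda>v. (norm (x - v))\<^sup>2) ` V"
  define d where "d = Inf D"
  have V0: "0 \<in> V" using sV by (simp add: subspace_0)
  have Dne: "D \<noteq> {}" using V0 by (auto simp: D_def)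
  have bdd: "bdd_below D" unfolding D_def by (rule bdd_belowI[of _ 0]) auto
  have dle: "d \<le> (norm (x - v))\<^sup>2" if "v \<in> V" for v
    unfolding d_def by (rule cInf_lower) (use that bdd in \<open>auto simp: D_def\<close>)
  have "\<forall>n::nat. \<exists>v\<in>V. (norm (x - v))\<^sup>2 < d + 1 / (real n + 1)"
  proof
    fix n :: nat
    have "Inf D < d + 1 / (real n + 1)" by (simp add: d_def)
    then obtain s where "s \<in> D" "s < d + 1 / (real n + 1)"
      using cInf_lessD[OF Dne] by blast
    then show "\<exists>v\<in>V. (norm (x - v))\<^sup>2 < d + 1 / (real n + 1)" by (auto simp: D_def)
  qed
  then obtain v where vV: "\<And>n. v n \<in> V" and vd: "\<And>n. (norm (x - v n))\<^sup>2 < d + 1 / (real n + 1)"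
    by metis
  have key: "(norm (v m - v n))\<^sup>2 \<le> 2 / (real m + 1) + 2 / (real n + 1)" for m n
  proof -
    have mid: "(1/2) *\<^sub>R (v m + v n) \<in> V"
      using sV vV by (simp add: subspace_add subspace_scale)
    have "d \<le> (norm (x - (1/2) *\<^sub>R (v m + v n)))\<^sup>2" by (rule dle[OF mid])
    moreover have "(norm ((x - v m) + (x - v n)))\<^sup>2 = 4 * (norm (x - (1/2) *\<^sub>R (v m + v n)))\<^sup>2"
    proof -
      have "(x - v m) + (x - v n) = 2 *\<^sub>R (x - (1/2) *\<^sub>R (v m + v n))"
        by (simp add: algebra_simps scaleR_2)
      then show ?thesis by (simp add: power2_eq_square)
    qed
    moreover have "(norm ((x - v m) - (x - v n)))\<^sup>2 + (norm ((x - v m) + (x - v n)))\<^sup>2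
        = 2 * (norm (x - v m))\<^sup>2 + 2 * (norm (x - v n))\<^sup>2"
      by (simp add: power2_norm_eq_inner inner_add_left inner_add_right inner_diff_left inner_diff_right inner_commute)
    moreover have "(x - v m) - (x - v n) = v n - v m" by simp
    moreover have "norm (v n - v m) = norm (v m - v n)" by (simp add: norm_minus_commute)
    ultimately have "(norm (v m - v n))\<^sup>2 + 4 * (norm (x - (1/2) *\<^sub>R (v m + v n)))\<^sup>2
        = 2 * (norm (x - v m))\<^sup>2 + 2 * (norm (x - v n))\<^sup>2" by metis
    then show ?thesis using vd[of m] vd[of n] \<open>d \<le> _\<close> by linarith
  qed
  have "Cauchy v"
  proof (rule metric_CauchyI)
    fix e :: real assume e: "e > 0"
    obtain M :: nat where M: "4 / e\<^sup>2 < real M" using reals_Archimedean2 by blast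
    show "\<exists>M. \<forall>m\<ge>M. \<forall>n\<ge>M. dist (v m) (v n) < e"
    proof (intro exI allI impI)
      fix m n assume mM: "m \<ge> M" and nM: "n \<ge> M"
      have e2: "e\<^sup>2 > 0" using e by simp
      have Mpos: "real M > 0" using M e2 by (smt (verit) divide_pos_pos)
      have a: "2 / (real m + 1) \<le> 2 / real M" using mM Mpos by (simp add: frac_le)
      have b: "2 / (real n + 1) \<le> 2 / real M" using nM Mpos by (simp add: frac_le)
      have "4 / real M < e\<^sup>2" using M Mpos e2 by (simp add: field_simps)
      then have "(norm (v m - v n))\<^sup>2 < e\<^sup>2" using key[of m n] a b by linarith
      then have "norm (v m - v n) < e" using e by (simp add: power_less_imp_less_base)
      then show "dist (v m) (v n) < e" by (simp add: dist_norm)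
    qed
  qed
  then obtain p where vp: "v \<longlonglongrightarrow> p" using Cauchy_convergent_iff convergent_def by blast
  have pV: "p \<in> V" using closed_sequentially[OF cV] vV vp by blast
  have "(\<lambda>n. (norm (x - v n))\<^sup>2) \<longlonglongrightarrow> (norm (x - p))\<^sup>2"
    by (intro tendsto_intros vp)
  moreover have "(\<lambda>n. d + 1 / (real n + 1)) \<longlonglongrightarrow> d + 0"
    by (intro tendsto_intros inv_n1)
  ultimately have pd: "(norm (x - p))\<^sup>2 \<le> d + 0"
    by (rule LIMSEQ_le) (use vd in \<open>auto intro: less_imp_le\<close>)
  show ?thesis
  proof (intro bexI[OF _ pV] ballI)
    fix w assume wV: "w \<in> V"
    define a where "a = inner (x - p) w"
    define q where "q = inner w w"
    have q0: "q \<ge> 0" by (simp add: q_def)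
    define t where "t = a / (q + 1)"
    have "p + t *\<^sub>R w \<in> V" using sV pV wV by (simp add: subspace_add subspace_scale)
    then have "d \<le> (norm (x - (p + t *\<^sub>R w)))\<^sup>2" by (rule dle)
    also have "(norm (x - (p + t *\<^sub>R w)))\<^sup>2 = (norm (x - p))\<^sup>2 - 2 * t * a + t\<^sup>2 * q"
      unfolding power2_norm_eq_inner a_def q_def
      by (simp add: inner_add_left inner_add_right inner_diff_left inner_diff_right inner_commute power2_eq_square algebra_simps)
    finally have "2 * t * a \<le> t\<^sup>2 * q" using pd by linarith
    then have "2 * t * a * (q+1)\<^sup>2 \<le> t\<^sup>2 * q * (q+1)\<^sup>2"
      by (rule mult_right_mono) simp
    moreover have tq: "t * (q+1) = a" using q0 by (simp add: t_def)
    moreover have "2 * t * a * (q+1)\<^sup>2 = 2 * a\<^sup>2 * (q+1)"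
      by (simp add: tq[symmetric] power2_eq_square algebra_simps)
    moreover have "t\<^sup>2 * q * (q+1)\<^sup>2 = a\<^sup>2 * q"
      by (simp add: tq[symmetric] power2_eq_square algebra_simps)
    ultimately have "2 * a\<^sup>2 * (q+1) \<le> a\<^sup>2 * q" by simp
    then have "a\<^sup>2 * (q + 2) \<le> 0" by (simp add: algebra_simps)
    then have "a\<^sup>2 \<le> 0" using q0 by (smt (verit) mult_pos_pos zero_le_power2)
    then show "inner (x - p) w = 0" by (simp add: a_def)
  qed
qed

context
  fixes V :: "'a::{real_inner,complete_space} set"
  assumes sV: "subspace V" and cV: "closed V"
begin

lemma oproj_uniq:
  assumes "p \<in> V" "\<forall>v\<in>V. inner (x - p) v = 0" "q \<in> V" "\<forall>v\<in>V. inner (x - q) v = 0"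
  shows "p = q"
proof -
  have "p - q \<in> V" using assms sV by (simp add: subspace_diff)
  then have "inner (x - q) (p - q) - inner (x - p) (p - q) = 0" using assms by simp
  then have "inner (p - q) (p - q) = 0" by (simp add: inner_diff_left inner_diff_right inner_commute)
  then show ?thesis by simp
qed

lemma oproj_char: "oproj V x \<in> V \<and> (\<forall>v\<in>V. inner (x - oproj V x) v = 0)"
proof -
  have "\<exists>!p. p \<in> V \<and> (\<forall>v\<in>V. inner (x - p) v = 0)"
    using proj_exists[OF sV cV, of x] oproj_uniq by blast
  then show ?thesis unfolding oproj_def by (rule theI')
qed

lemma oproj_in: "oproj V x \<in> V" using oproj_char by blast

lemma oproj_orth: "v \<in> V \<Longrightarrow> inner (x - oproj V x) v = 0" using oproj_char by blast

lemma oproj_eqI: "p \<in> V \<Longrightarrow> \<forall>v\<in>V. inner (x - p) v = 0 \<Longrightarrow> oproj V x = p"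
  using oproj_uniq oproj_char by blast

lemma oproj_id: "v \<in> V \<Longrightarrow> oproj V v = v"
  by (rule oproj_eqI) auto

lemma oproj_inner: "y \<in> V \<Longrightarrow> inner (oproj V x) y = inner x y"
  using oproj_orth[of y x] by (simp add: inner_diff_left)

lemma oproj_inner2: "y \<in> V \<Longrightarrow> inner y (oproj V x) = inner y x"
  using oproj_inner by (simp add: inner_commute)

lemma oproj_add: "oproj V (x + y) = oproj V x + oproj V y"
proof (rule oproj_eqI)
  show "oproj V x + oproj V y \<in> V" using sV oproj_in by (simp add: subspace_add)
  show "\<forall>v\<in>V. inner (x + y - (oproj V x + oproj V y)) v = 0"
  proof
    fix v assume v: "v \<in> V"
    have "inner (x + y - (oproj V x + oproj V y)) v = inner (x - oproj V x) v + inner (y - oproj V y) v"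
      by (simp add: inner_add_left inner_diff_left)
    then show "inner (x + y - (oproj V x + oproj V y)) v = 0" using oproj_orth[OF v] by simp
  qed
qed

lemma oproj_scale: "oproj V (c *\<^sub>R x) = c *\<^sub>R oproj V x"
proof (rule oproj_eqI)
  show "c *\<^sub>R oproj V x \<in> V" using sV oproj_in by (simp add: subspace_scale)
  show "\<forall>v\<in>V. inner (c *\<^sub>R x - c *\<^sub>R oproj V x) v = 0"
  proof
    fix v assume v: "v \<in> V"
    have "inner (c *\<^sub>R x - c *\<^sub>R oproj V x) v = c * inner (x - oproj V x) v"
      by (simp add: inner_diff_left right_diff_distrib)
    then show "inner (c *\<^sub>R x - c *\<^sub>R oproj V x) v = 0" using oproj_orth[OF v] by simp
  qed
qed

lemma oproj_linear: "linear (oproj V)"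
  by (rule linearI) (simp_all add: oproj_add oproj_scale)

lemma oproj_norm: "norm (oproj V x) \<le> norm x"
proof -
  define p where "p = oproj V x"
  define r where "r = x - p"
  have o: "inner r p = 0" unfolding r_def p_def by (rule oproj_orth[OF oproj_in])
  have "inner x x = inner (p + r) (p + r)" by (simp add: r_def)
  also have "\<dots> = inner p p + inner p r + inner r p + inner r r"
    by (simp add: inner_add_left inner_add_right)
  finally have "inner p p \<le> inner x x" using o inner_commute[of p r] by simp
  then have "(norm p)\<^sup>2 \<le> (norm x)\<^sup>2" by (simp add: power2_norm_eq_inner)
  then show ?thesis unfolding p_def by (rule power2_le_imp_le) simp
qed

lemma oproj_bl: "bounded_linear (oproj V)"
  using oproj_linear oproj_norm
  by (intro bounded_linear_intro[of _ 1]) (auto simp: oproj_add oproj_scale)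

lemma oproj_sym: "inner (oproj V x) y = inner x (oproj V y)"
proof -
  have "inner (oproj V x) y = inner (oproj V x) (oproj V y)"
    using oproj_inner2[OF oproj_in, of x y] by (simp add: inner_commute)
  also have "\<dots> = inner x (oproj V y)" using oproj_inner[OF oproj_in] by simp
  finally show ?thesis .
qed

lemma oproj_cont: "continuous_on UNIV (oproj V)"
  using oproj_bl by (simp add: linear_continuous_on)

end

lemma gdist_bound:
  fixes X Y :: "'a::{real_inner,complete_space} set"
  assumes "subspace X" "closed X" "subspace Y" "closed Y"
  shows "norm (oproj X x - oproj Y x) \<le> gdist X Y * norm x"
proof -
  have "bounded_linear (\<lambda>x. oproj X x - oproj Y x)"
    using oproj_bl assms by (intro bounded_linear_sub) auto
  then show ?thesis unfolding gdist_def by (rule onorm)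
qed

lemma gdist_nonneg:
  fixes X Y :: "'a::{real_inner,complete_space} set"
  assumes "subspace X" "closed X" "subspace Y" "closed Y"
  shows "gdist X Y \<ge> 0"
proof -
  have "bounded_linear (\<lambda>x. oproj X x - oproj Y x)"
    using oproj_bl assms by (intro bounded_linear_sub) auto
  then show ?thesis unfolding gdist_def by (rule onorm_pos_le)
qed

lemma card_le_orth:
  fixes S :: "'a::real_inner set"
  assumes fS: "finite S" and iI: "independent I"
    and H: "\<forall>x\<in>span I. (\<forall>s\<in>S. inner x s = 0) \<longrightarrow> x = 0"
  shows "finite I \<and> card I \<le> card S"
proof -
  define g where "g x = (\<Sum>s\<in>S. inner x s *\<^sub>R s)" for x
  have lg: "linear g"
    by (rule linearI) (simp_all add: g_def inner_add_left scaleR_add_left sum.distrib scaleR_sum_right)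
  have g0: "x = 0" if "x \<in> span I" "g x = 0" for x
  proof -
    have "inner (g x) x = (\<Sum>s\<in>S. (inner x s)\<^sup>2)"
      unfolding g_def inner_sum_left by (simp add: power2_eq_square inner_commute)
    then have "(\<Sum>s\<in>S. (inner x s)\<^sup>2) = 0" using that by simp
    then have "\<forall>s\<in>S. (inner x s)\<^sup>2 = 0" using sum_nonneg_eq_0_iff[OF fS, of "\<lambda>s. (inner x s)\<^sup>2"] by simp
    then show "x = 0" using H that by simp
  qed
  have inj: "inj_on g (span I)"
    using g0 linear_inj_on_iff_eq_0[OF lg subspace_span] by blast
  have ind: "independent (g ` I)"
    by (rule linear_independent_injective_image[OF lg iI inj])
  have sub: "g ` I \<subseteq> span S"
  proof
    fix y assume "y \<in> g ` I"
    then obtain x where "y = g x" by blast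
    show "y \<in> span S" unfolding \<open>y = g x\<close> g_def
      by (rule span_sum, rule span_scale, rule span_base)
  qed
  have "finite (g ` I) \<and> card (g ` I) \<le> card S"
    by (rule independent_span_bound[OF fS ind sub])
  moreover have injI: "inj_on g I" using inj span_superset inj_on_subset by blast
  ultimately show ?thesis using finite_imageD card_image by metis
qed

lemma edim_ge:
  assumes "finite E" "independent E" "E \<subseteq> W"
  shows "enat (card E) \<le> edim W"
  unfolding edim_def by (rule Sup_upper) (use assms in blast)

lemma edim_le:
  assumes "\<And>E. finite E \<Longrightarrow> independent E \<Longrightarrow> E \<subseteq> W \<Longrightarrow> card E \<le> m"
  shows "edim W \<le> enat m"
  unfolding edim_def by (rule Sup_least) (use assms in auto)

lemma enat_Sup_in:
  fixes X :: "enat set"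
  assumes "X \<noteq> {}" "\<And>x. x \<in> X \<Longrightarrow> x \<le> enat m"
  shows "Sup X \<in> X"
proof -
  have "finite X" using assms finite_enat_bounded by blast
  then show ?thesis using assms cSup_eq_Max Max_in by metis
qed

lemma sup_add_bound:
  fixes X Y :: "enat set"
  assumes "X \<noteq> {}" "Y \<noteq> {}" "\<And>x y. x \<in> X \<Longrightarrow> y \<in> Y \<Longrightarrow> x + y \<le> enat m"
  shows "Sup X + Sup Y \<le> enat m"
proof -
  obtain x0 where x0: "x0 \<in> X" using assms by blast
  obtain y0 where y0: "y0 \<in> Y" using assms by blast
  have bx: "x \<le> enat m" if "x \<in> X" for x
    using assms(3)[OF that y0] by (metis add_increasing2 order_trans zero_le order_refl)
  have by': "y \<le> enat m" if "y \<in> Y" for y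
    using assms(3)[OF x0 that] by (metis add_increasing order_trans zero_le order_refl)
  have "Sup X \<in> X" by (rule enat_Sup_in[OF assms(1) bx])
  moreover have "Sup Y \<in> Y" by (rule enat_Sup_in[OF assms(2) by'])
  ultimately show ?thesis using assms(3) by blast
qed

lemma indep_union:
  fixes A B :: "'a::real_vector set"
  assumes "finite B" "independent A" "independent B" "span A \<inter> span B \<subseteq> {0}"
  shows "independent (A \<union> B) \<and> A \<inter> B = {}"
proof -
  have "independent (A \<union> B)" using assms
  proof (induction B rule: finite_induct)
    case empty
    then show ?case by simp
  next
    case (insert b B)
    have iB: "independent B" using insert.prems(2) by (rule independent_mono) auto
    have sp: "span A \<inter> span B \<subseteq> {0}" using insert.prems(3) span_mono[of B "insert b B"] by blast
    have IH: "independent (A \<union> B)" using insert.IH insert.prems(1) iB sp by blast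
    have bnot: "b \<notin> span B" using insert.prems(2) insert.hyps(2) by (simp add: independent_insert)
    have "b \<notin> span (A \<union> B)"
    proof
      assume "b \<in> span (A \<union> B)"
      then obtain a c where ac: "b = a + c" "a \<in> span A" "c \<in> span B" by (auto simp: span_Un)
      have "a = b - c" using ac by simp
      moreover have "b - c \<in> span (insert b B)"
        using ac span_mono[of B "insert b B"] by (intro span_diff) (auto intro: span_base)
      ultimately have "a = 0" using ac(2) insert.prems(3) by blast
      then show False using ac bnot by simp
    qed
    then show ?case using IH by (simp add: independent_insertI)
  qed
  moreover have "A \<inter> B = {}"
  proof (rule ccontr)
    assume "A \<inter> B \<noteq> {}"
    then obtain x where "x \<in> A" "x \<in> B" by blast
    then have "x = 0" using assms(4) span_base by blast
    then show False using \<open>x \<in> A\<close> assms(2) dependent_zero by blast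
  qed
  ultimately show ?thesis by blast
qed

lemma compact_box_sums:
  fixes h :: "'b \<Rightarrow> 'a::real_normed_vector"
  assumes "finite B"
  shows "compact {\<Sum>b\<in>B. f b *\<^sub>R h b | f. \<forall>b\<in>B. \<bar>f b\<bar> \<le> r}"
  using assms
proof (induction B rule: finite_induct)
  case empty
  then show ?case by simp
next
  case (insert a B)
  define C where "C = {\<Sum>b\<in>B. f b *\<^sub>R h b | f. \<forall>b\<in>B. \<bar>f b\<bar> \<le> r}"
  have eq: "{\<Sum>b\<in>insert a B. f b *\<^sub>R h b | f. \<forall>b\<in>insert a B. \<bar>f b\<bar> \<le> r}
      = (\<lambda>p. fst p *\<^sub>R h a + snd p) ` ({-r..r} \<times> C)" (is "?L = ?R")
  proof
    show "?L \<subseteq> ?R"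
    proof
      fix z assume "z \<in> ?L"
      then obtain f where f: "z = (\<Sum>b\<in>insert a B. f b *\<^sub>R h b)" "\<forall>b\<in>insert a B. \<bar>f b\<bar> \<le> r" by blast
      have "z = f a *\<^sub>R h a + (\<Sum>b\<in>B. f b *\<^sub>R h b)" using f insert.hyps by simp
      moreover have "(\<Sum>b\<in>B. f b *\<^sub>R h b) \<in> C" using f(2) unfolding C_def by blast
      moreover have "f a \<in> {-r..r}" using f(2) by auto
      ultimately show "z \<in> ?R" by (intro image_eqI[where x="(f a, \<Sum>b\<in>B. f b *\<^sub>R h b)"]) auto
    qed
  next
    show "?R \<subseteq> ?L"
    proof
      fix z assume "z \<in> ?R"
      then obtain t y where ty: "z = t *\<^sub>R h a + y" "t \<in> {-r..r}" "y \<in> C" by auto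
      then obtain f where f: "y = (\<Sum>b\<in>B. f b *\<^sub>R h b)" "\<forall>b\<in>B. \<bar>f b\<bar> \<le> r" unfolding C_def by blast
      define f' where "f' = f(a := t)"
      have "(\<Sum>b\<in>B. f' b *\<^sub>R h b) = (\<Sum>b\<in>B. f b *\<^sub>R h b)"
        using insert.hyps by (intro sum.cong) (auto simp: f'_def)
      then have "z = (\<Sum>b\<in>insert a B. f' b *\<^sub>R h b)" using ty f insert.hyps by (simp add: f'_def)
      moreover have "\<forall>b\<in>insert a B. \<bar>f' b\<bar> \<le> r" using f ty by (auto simp: f'_def)
      ultimately show "z \<in> ?L" by blast
    qed
  qed
  have "compact ({-r..r} \<times> C)" using insert.IH unfolding C_def by (intro compact_Times) auto
  moreover have "continuous_on ({-r..r} \<times> C) (\<lambda>p. fst p *\<^sub>R h a + snd p)"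
    by (intro continuous_intros)
  ultimately show ?case unfolding eq by (rule compact_continuous_image[rotated])
qed

definition GD :: "('a::real_inner \<Rightarrow>\<^sub>L 'a) \<Rightarrow> 'a set \<Rightarrow> 'a set \<Rightarrow> 'a set \<Rightarrow> real \<Rightarrow> real \<Rightarrow> bool" where
  "GD T V S B c M \<longleftrightarrow> (\<forall>y\<in>V. (\<forall>s\<in>S. inner y s = 0) \<longrightarrow>
      c * (norm y)\<^sup>2 - M * (\<Sum>b\<in>B. (inner y b)\<^sup>2) \<le> inner (T y) y)"

lemma los_scale: "linear_on_sub V f \<Longrightarrow> x \<in> V \<Longrightarrow> f (a *\<^sub>R x) = a *\<^sub>R f x"
  by (simp add: linear_on_sub_def)

lemma los_add: "linear_on_sub V f \<Longrightarrow> x \<in> V \<Longrightarrow> y \<in> V \<Longrightarrow> f (x + y) = f x + f y"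
  by (simp add: linear_on_sub_def)

lemma los_zero: "linear_on_sub V f \<Longrightarrow> subspace V \<Longrightarrow> f 0 = 0"
  using los_scale[of V f 0 0] by (simp add: subspace_0)

lemma posop_CS:
  assumes sV: "subspace V" and P: "pos_iso_on V P" and x: "x \<in> V" and y: "y \<in> V"
  shows "(inner (P x) y)\<^sup>2 \<le> inner (P x) x * inner (P y) y"
proof -
  have lin: "linear_on_sub V P" and sym: "\<forall>x\<in>V. \<forall>y\<in>V. inner (P x) y = inner x (P y)"
    and pos: "\<forall>x\<in>V. x \<noteq> 0 \<longrightarrow> inner (P x) x > 0"
    using P by (auto simp: pos_iso_on_def)
  have P0: "P 0 = 0" by (rule los_zero[OF lin sV])
  have nn: "inner (P z) z \<ge> 0" if "z \<in> V" for z
    using pos that P0 by (cases "z = 0") (auto intro: less_imp_le)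
  show ?thesis
  proof (cases "y = 0")
    case True
    then show ?thesis using P0 by simp
  next
    case False
    define \<alpha> where "\<alpha> = inner (P x) x"
    define \<beta> where "\<beta> = inner (P y) y"
    define \<gamma> where "\<gamma> = inner (P x) y"
    have b: "\<beta> > 0" using pos y False by (simp add: \<beta>_def)
    define t where "t = - \<gamma> / \<beta>"
    have zV: "x + t *\<^sub>R y \<in> V" using sV x y by (simp add: subspace_add subspace_scale)
    have Pz: "P (x + t *\<^sub>R y) = P x + t *\<^sub>R P y"
      using los_add[OF lin x] los_scale[OF lin y] sV y by (simp add: subspace_scale)
    have g2: "inner (P y) x = \<gamma>" using sym x y by (simp add: \<gamma>_def inner_commute)
    have "0 \<le> inner (P (x + t *\<^sub>R y)) (x + t *\<^sub>R y)" by (rule nn[OF zV])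
    also have "\<dots> = \<alpha> + 2 * t * \<gamma> + t\<^sup>2 * \<beta>"
      unfolding Pz using g2 by (simp add: inner_add_left inner_add_right \<alpha>_def \<beta>_def \<gamma>_def power2_eq_square algebra_simps)
    also have "\<dots> = \<alpha> - \<gamma>\<^sup>2 / \<beta>"
      using b by (simp add: t_def power2_eq_square field_simps)
    finally have "\<gamma>\<^sup>2 / \<beta> \<le> \<alpha>" by simp
    then have "\<gamma>\<^sup>2 \<le> \<alpha> * \<beta>" using b by (simp add: field_simps)
    then show ?thesis by (simp add: \<alpha>_def \<beta>_def \<gamma>_def)
  qed
qed

lemma posop_coercive:
  assumes sV: "subspace V" and P: "pos_iso_on V P"
  shows "\<exists>c>0. \<forall>x\<in>V. c * (norm x)\<^sup>2 \<le> inner (P x) x"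
proof -
  have lin: "linear_on_sub V P" and PV: "P ` V = V"
    and pos: "\<forall>x\<in>V. x \<noteq> 0 \<longrightarrow> inner (P x) x > 0"
    using P by (auto simp: pos_iso_on_def)
  obtain C where C: "C > 0" "\<forall>x\<in>V. norm (P x) \<le> C * norm x \<and> norm x \<le> C * norm (P x)"
    using P by (auto simp: pos_iso_on_def)
  have P0: "P 0 = 0" by (rule los_zero[OF lin sV])
  have nn: "inner (P z) z \<ge> 0" if "z \<in> V" for z
    using pos that P0 by (cases "z = 0") (auto intro: less_imp_le)
  have main: "(1 / C^3) * (norm x)\<^sup>2 \<le> inner (P x) x" if x: "x \<in> V" for x
  proof -
    have Px: "P x \<in> V" using PV x by blast
    have a: "(norm (P x))\<^sup>2 \<le> C * inner (P x) x"
    proof (cases "P x = 0")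
      case True
      then show ?thesis by simp
    next
      case False
      have cs: "(inner (P x) (P x))\<^sup>2 \<le> inner (P x) x * inner (P (P x)) (P x)"
        by (rule posop_CS[OF sV P x Px])
      have i2: "inner (P (P x)) (P x) \<le> C * (norm (P x))\<^sup>2"
      proof -
        have "inner (P (P x)) (P x) \<le> norm (P (P x)) * norm (P x)" by (rule norm_cauchy_schwarz)
        also have "\<dots> \<le> C * norm (P x) * norm (P x)"
          using C(2) Px by (intro mult_right_mono) auto
        finally show ?thesis by (simp add: power2_eq_square mult.assoc)
      qed
      have "inner (P x) x * inner (P (P x)) (P x) \<le> inner (P x) x * (C * (norm (P x))\<^sup>2)"
        using i2 nn[OF x] by (rule mult_left_mono)
      with cs have "((norm (P x))\<^sup>2)\<^sup>2 \<le> (C * inner (P x) x) * (norm (P x))\<^sup>2"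
        by (simp add: power2_norm_eq_inner[symmetric] algebra_simps)
      moreover have "(norm (P x))\<^sup>2 > 0" using False by simp
      ultimately show ?thesis
        using mult_le_cancel_right_pos[of "(norm (P x))\<^sup>2" "(norm (P x))\<^sup>2" "C * inner (P x) x"]
        by (simp add: power2_eq_square[of "(norm (P x))\<^sup>2"])
    qed
    have "norm x \<le> C * norm (P x)" using C x by blast
    then have "(norm x)\<^sup>2 \<le> (C * norm (P x))\<^sup>2" by (rule power_mono) simp
    also have "\<dots> = C\<^sup>2 * (norm (P x))\<^sup>2" by (simp add: power_mult_distrib)
    also have "\<dots> \<le> C\<^sup>2 * (C * inner (P x) x)" using a by (rule mult_left_mono) simp
    finally have "(norm x)\<^sup>2 \<le> C^3 * inner (P x) x" by (simp add: power2_eq_square power3_eq_cube mult.assoc)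
    then show ?thesis using C(1) by (simp add: field_simps)
  qed
  show ?thesis using C(1) main by (intro exI[of _ "1 / C^3"]) auto
qed

lemma abs_le_quad: "(e::real) > 0 \<Longrightarrow> \<bar>a\<bar> \<le> e + a\<^sup>2 / (4 * e)"
proof -
  assume e: "e > 0"
  have "0 \<le> (\<bar>a\<bar> - 2 * e)\<^sup>2" by simp
  then have "4 * e * \<bar>a\<bar> \<le> 4 * e * e + a\<^sup>2" by (simp add: power2_eq_square algebra_simps)
  then show ?thesis using e by (simp add: field_simps)
qed

lemma compact_op_bound:
  assumes sV: "subspace V" and K: "compact_op_on V K" and e: "e > 0"
  shows "\<exists>F. finite F \<and> (\<forall>x\<in>V. - 2 * e * (norm x)\<^sup>2 - (1 / (4 * e)) * (\<Sum>f\<in>F. (inner x f)\<^sup>2) \<le> inner (K x) x)"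
proof -
  have lin: "linear_on_sub V K" and cK: "compact (closure (K ` (V \<inter> cball 0 1)))"
    using K by (auto simp: compact_op_on_def)
  obtain F where F: "finite F" "F \<subseteq> closure (K ` (V \<inter> cball 0 1))"
      "closure (K ` (V \<inter> cball 0 1)) \<subseteq> (\<Union>f\<in>F. ball f e)"
  proof -
    have "\<forall>e>0. \<exists>k. finite k \<and> k \<subseteq> closure (K ` (V \<inter> cball 0 1)) \<and>
        closure (K ` (V \<inter> cball 0 1)) \<subseteq> (\<Union>x\<in>k. ball x e)"
      by (rule seq_compact_imp_totally_bounded[OF compact_imp_seq_compact[OF cK]])
    then have "\<exists>k. finite k \<and> k \<subseteq> closure (K ` (V \<inter> cball 0 1)) \<and>
        closure (K ` (V \<inter> cball 0 1)) \<subseteq> (\<Union>x\<in>k. ball x e)" using e by blast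
    then show ?thesis using that by blast
  qed
  have unit: "- 2 * e - (1 / (4 * e)) * (\<Sum>f\<in>F. (inner u f)\<^sup>2) \<le> inner (K u) u"
    if u: "u \<in> V" "norm u = 1" for u
  proof -
    have "K u \<in> closure (K ` (V \<inter> cball 0 1))" using u closure_subset by fastforce
    then obtain f where f: "f \<in> F" "dist f (K u) < e" using F(3) by auto
    have "inner (K u) u = inner (K u - f) u + inner u f"
      using inner_diff_left[of "K u" f u] inner_commute[of f u] by simp
    moreover have "\<bar>inner (K u - f) u\<bar> \<le> e"
    proof -
      have "\<bar>inner (K u - f) u\<bar> \<le> norm (K u - f) * norm u" by (rule Cauchy_Schwarz_ineq2)
      also have "\<dots> \<le> e" using f u by (simp add: dist_norm norm_minus_commute)
      finally show ?thesis .
    qed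
    moreover have "\<bar>inner u f\<bar> \<le> e + (inner u f)\<^sup>2 / (4 * e)" by (rule abs_le_quad[OF e])
    moreover have "(inner u f)\<^sup>2 \<le> (\<Sum>f\<in>F. (inner u f)\<^sup>2)"
      by (rule member_le_sum) (use f F in auto)
    moreover have "(inner u f)\<^sup>2 / (4 * e) \<le> (1 / (4 * e)) * (\<Sum>f\<in>F. (inner u f)\<^sup>2)"
      using calculation(4) e by (simp add: divide_right_mono)
    ultimately show ?thesis by linarith
  qed
  have "- 2 * e * (norm x)\<^sup>2 - (1 / (4 * e)) * (\<Sum>f\<in>F. (inner x f)\<^sup>2) \<le> inner (K x) x"
    if x: "x \<in> V" for x
  proof (cases "x = 0")
    case True
    then show ?thesis using los_zero[OF lin sV] e by (simp add: sum_nonneg)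
  next
    case False
    define n where "n = norm x"
    define u where "u = (1 / n) *\<^sub>R x"
    have n: "n > 0" using False by (simp add: n_def)
    have uV: "u \<in> V" using sV x by (simp add: u_def subspace_scale)
    have un: "norm u = 1" using n by (simp add: u_def n_def)
    have xu: "x = n *\<^sub>R u" using n by (simp add: u_def)
    have Kx: "K x = n *\<^sub>R K u" using los_scale[OF lin uV] xu by simp
    have "inner (K x) x = inner (n *\<^sub>R K u) (n *\<^sub>R u)" by (simp only: Kx) (simp only: xu[symmetric])
    then have "inner (K x) x = n\<^sup>2 * inner (K u) u" by (simp add: power2_eq_square)
    moreover have "(\<Sum>f\<in>F. (inner x f)\<^sup>2) = n\<^sup>2 * (\<Sum>f\<in>F. (inner u f)\<^sup>2)"
      by (simp add: xu power_mult_distrib sum_distrib_left)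
    moreover have "(norm x)\<^sup>2 = n\<^sup>2" by (simp add: n_def)
    moreover have "n\<^sup>2 * (- 2 * e - (1 / (4 * e)) * (\<Sum>f\<in>F. (inner u f)\<^sup>2)) \<le> n\<^sup>2 * inner (K u) u"
      using unit[OF uV un] by (rule mult_left_mono) simp
    ultimately show ?thesis by (simp add: algebra_simps)
  qed
  then show ?thesis using F(1) by blast
qed

lemma ess_pos_GD:
  assumes sV: "subspace V" and E: "ess_pos T V"
  shows "\<exists>B c M. finite B \<and> c > 0 \<and> M \<ge> 0 \<and> GD T V {} B c M"
proof -
  obtain P K where P: "pos_iso_on V P" and K: "compact_op_on V K"
    and rep: "\<forall>x\<in>V. \<forall>y\<in>V. inner (T x) y = inner (P x + K x) y"
    using E by (auto simp: ess_pos_def)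
  obtain c where c: "c > 0" "\<forall>x\<in>V. c * (norm x)\<^sup>2 \<le> inner (P x) x"
    using posop_coercive[OF sV P] by blast
  have e: "c / 4 > 0" using c by simp
  obtain F where F: "finite F"
    "\<forall>x\<in>V. - 2 * (c/4) * (norm x)\<^sup>2 - (1 / (4 * (c/4))) * (\<Sum>f\<in>F. (inner x f)\<^sup>2) \<le> inner (K x) x"
    using compact_op_bound[OF sV K e] by blast
  have "GD T V {} F (c / 2) (1 / c)"
    unfolding GD_def
  proof (intro ballI impI)
    fix y assume y: "y \<in> V"
    have "inner (T y) y = inner (P y) y + inner (K y) y" using rep y by (simp add: inner_add_left)
    moreover have "c * (norm y)\<^sup>2 \<le> inner (P y) y" using c(2) y by blast
    moreover have "- 2 * (c/4) * (norm y)\<^sup>2 - (1 / (4 * (c/4))) * (\<Sum>f\<in>F. (inner y f)\<^sup>2) \<le> inner (K y) y"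
      using F(2) y by blast
    moreover have "1 / (4 * (c/4)) = 1 / c" by simp
    ultimately show "c / 2 * (norm y)\<^sup>2 - 1 / c * (\<Sum>b\<in>F. (inner y b)\<^sup>2) \<le> inner (T y) y"
      by linarith
  qed
  then show ?thesis using F(1) c(1) by (intro exI[of _ F] exI[of _ "c/2"] exI[of _ "1/c"]) auto
qed

lemma LM_surj:
  fixes V :: "'a::{real_inner,complete_space} set"
  assumes sV: "subspace V" and cV: "closed V" and bl: "bounded_linear P" and PV: "P ` V \<subseteq> V"
    and c: "c > 0" and coer: "\<forall>x\<in>V. c * (norm x)\<^sup>2 \<le> inner (P x) x"
  shows "P ` V = V"
proof -
  have lin: "linear P" using bl bounded_linear.linear by blast
  define R where "R = P ` V"
  have sR: "subspace R" unfolding R_def by (rule linear_subspace_image[OF lin sV])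
  have low: "c * norm x \<le> norm (P x)" if x: "x \<in> V" for x
  proof (cases "x = 0")
    case True
    then show ?thesis by simp
  next
    case False
    have "c * (norm x)\<^sup>2 \<le> inner (P x) x" using coer x by blast
    also have "\<dots> \<le> norm (P x) * norm x" by (rule norm_cauchy_schwarz)
    finally have "(c * norm x) * norm x \<le> norm (P x) * norm x" by (simp add: power2_eq_square mult.assoc)
    then show ?thesis using False by simp
  qed
  have cR: "closed R"
    unfolding closed_sequential_limits
  proof (intro allI impI, elim conjE)
    fix y l assume yR: "\<forall>n. y n \<in> R" and yl: "y \<longlonglongrightarrow> l"
    have "\<forall>n. \<exists>x. x \<in> V \<and> y n = P x" using yR unfolding R_def by blast
    then obtain x where xx: "\<forall>n. x n \<in> V \<and> y n = P (x n)" by metis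
    have xV: "\<And>n. x n \<in> V" and yx: "\<And>n. y n = P (x n)" using xx by auto
    have Cy: "Cauchy y" using yl by (rule LIMSEQ_imp_Cauchy)
    have "Cauchy x"
    proof (rule metric_CauchyI)
      fix e :: real assume e: "e > 0"
      have ce: "c * e > 0" using e c by simp
      obtain N where N: "\<forall>m\<ge>N. \<forall>n\<ge>N. dist (y m) (y n) < c * e"
        using metric_CauchyD[OF Cy ce] by blast
      show "\<exists>M. \<forall>m\<ge>M. \<forall>n\<ge>M. dist (x m) (x n) < e"
      proof (intro exI allI impI)
        fix m n assume "m \<ge> N" "n \<ge> N"
        then have d: "norm (y m - y n) < c * e" using N by (simp add: dist_norm)
        have "x m - x n \<in> V" using sV xV by (simp add: subspace_diff)
        then have "c * norm (x m - x n) \<le> norm (P (x m - x n))" by (rule low)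
        also have "P (x m - x n) = y m - y n" using yx linear_diff[OF lin] by simp
        finally have "c * norm (x m - x n) < c * e" using d by simp
        then show "dist (x m) (x n) < e" using c by (simp add: dist_norm)
      qed
    qed
    then obtain z where xz: "x \<longlonglongrightarrow> z" using Cauchy_convergent_iff convergent_def by blast
    have zV: "z \<in> V" using closed_sequentially[OF cV] xV xz by blast
    have "(\<lambda>n. P (x n)) \<longlonglongrightarrow> P z" by (rule bounded_linear.tendsto[OF bl xz])
    moreover have "y = (\<lambda>n. P (x n))" using yx by (simp add: fun_eq_iff)
    ultimately have "y \<longlonglongrightarrow> P z" by simp
    then have "l = P z" using yl LIMSEQ_unique by blast
    then show "l \<in> R" using zV unfolding R_def by blast
  qed
  have "V \<subseteq> R"
  proof
    fix z assume zV: "z \<in> V"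
    define r where "r = oproj R z"
    have rR: "r \<in> R" unfolding r_def by (rule oproj_in[OF sR cR])
    have rV: "r \<in> V" using rR PV R_def by blast
    have d: "z - r \<in> V" using sV zV rV by (simp add: subspace_diff)
    have "P (z - r) \<in> R" using d unfolding R_def by blast
    then have "inner (z - r) (P (z - r)) = 0" unfolding r_def by (rule oproj_orth[OF sR cR])
    moreover have "c * (norm (z - r))\<^sup>2 \<le> inner (P (z - r)) (z - r)" using coer d by blast
    ultimately have "c * (norm (z - r))\<^sup>2 \<le> 0" by (simp add: inner_commute)
    then have "z - r = 0" using c by (simp add: mult_le_0_iff)
    then show "z \<in> R" using rR by simp
  qed
  then show ?thesis using PV R_def by blast
qed

lemma GD_ess_pos:
  fixes T :: "'a::{real_inner,complete_space} \<Rightarrow>\<^sub>L 'a"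
  assumes sV: "subspace V" and cV: "closed V" and sa: "selfadjoint T"
    and fB: "finite B" and c: "c > 0" and M: "M \<ge> 0" and G: "GD T V {} B c M"
  shows "ess_pos T V"
proof -
  define pb where "pb b = oproj V b" for b
  have pbV: "pb b \<in> V" for b unfolding pb_def by (rule oproj_in[OF sV cV])
  define g where "g x = (\<Sum>b\<in>B. inner x (pb b) *\<^sub>R pb b)" for x
  define P where "P x = oproj V (T x) + M *\<^sub>R g x" for x
  define K where "K x = - (M *\<^sub>R g x)" for x
  have blg: "bounded_linear g" unfolding g_def
    by (rule bounded_linear_sum) (rule bounded_linear_compose[OF bounded_linear_scaleR_left bounded_linear_inner_left])
  have blP: "bounded_linear P" unfolding P_def
    by (intro bounded_linear_add bounded_linear_compose[OF oproj_bl[OF sV cV]] blinfun.bounded_linear_right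
        bounded_linear_compose[OF bounded_linear_scaleR_right blg])
  have linP: "linear P" using blP bounded_linear.linear by blast
  have linK: "linear K" unfolding K_def
    by (intro bounded_linear.linear bounded_linear_minus bounded_linear_compose[OF bounded_linear_scaleR_right blg])
  have gV: "g x \<in> V" for x unfolding g_def
    by (rule subspace_sum[OF sV]) (simp add: subspace_scale[OF sV] pbV)
  have PV: "P x \<in> V" for x unfolding P_def
    using gV oproj_in[OF sV cV] sV by (simp add: subspace_add subspace_scale)
  have KV: "K x \<in> V" for x unfolding K_def using gV sV by (simp add: subspace_neg subspace_scale)
  have inpb: "inner x (pb b) = inner x b" if "x \<in> V" for x b
    unfolding pb_def by (rule oproj_inner2[OF sV cV that])
  have gx: "inner (g x) y = (\<Sum>b\<in>B. inner x (pb b) * inner y (pb b))" for x y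
    unfolding g_def inner_sum_left by (simp add: inner_commute)
  have coer: "\<forall>x\<in>V. c * (norm x)\<^sup>2 \<le> inner (P x) x"
  proof
    fix x assume x: "x \<in> V"
    have "inner (P x) x = inner (T x) x + M * (\<Sum>b\<in>B. (inner x b)\<^sup>2)"
      unfolding P_def using x oproj_inner[OF sV cV x] by (simp add: inner_add_left gx inpb power2_eq_square)
    moreover have "c * (norm x)\<^sup>2 - M * (\<Sum>b\<in>B. (inner x b)\<^sup>2) \<le> inner (T x) x"
      using G x unfolding GD_def by blast
    ultimately show "c * (norm x)\<^sup>2 \<le> inner (P x) x" by linarith
  qed
  have PVV: "P ` V = V"
    by (rule LM_surj[OF sV cV blP _ c coer]) (use PV in blast)
  obtain K0 where K0: "K0 > 0" "\<forall>x. norm (P x) \<le> norm x * K0"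
    using bounded_linear.pos_bounded[OF blP] by blast
  have low: "norm x \<le> (1 / c) * norm (P x)" if x: "x \<in> V" for x
  proof (cases "x = 0")
    case True
    then show ?thesis using linear_0[OF linP] by simp
  next
    case False
    have "c * (norm x)\<^sup>2 \<le> inner (P x) x" using coer x by blast
    also have "\<dots> \<le> norm (P x) * norm x" by (rule norm_cauchy_schwarz)
    finally have "(c * norm x) * norm x \<le> norm (P x) * norm x" by (simp add: power2_eq_square mult.assoc)
    then have "c * norm x \<le> norm (P x)" using False by simp
    then show ?thesis using c by (simp add: field_simps)
  qed
  have pos_iso: "pos_iso_on V P"
    unfolding pos_iso_on_def
  proof (intro conjI)
    show "linear_on_sub V P" unfolding linear_on_sub_def
      using linear_add[OF linP] linear_scale[OF linP] by blast
    show "P ` V = V" by (rule PVV)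
    show "\<exists>C>0. \<forall>x\<in>V. norm (P x) \<le> C * norm x \<and> norm x \<le> C * norm (P x)"
    proof (intro exI[of _ "max K0 (1/c)"] conjI ballI)
      show "max K0 (1/c) > 0" using K0 by simp
      fix x assume x: "x \<in> V"
      have "norm (P x) \<le> K0 * norm x" using K0 by (simp add: mult.commute)
      also have "\<dots> \<le> max K0 (1/c) * norm x" by (rule mult_right_mono) auto
      finally show "norm (P x) \<le> max K0 (1/c) * norm x" .
      have "norm x \<le> (1/c) * norm (P x)" by (rule low[OF x])
      also have "\<dots> \<le> max K0 (1/c) * norm (P x)" by (rule mult_right_mono) auto
      finally show "norm x \<le> max K0 (1/c) * norm (P x)" .
    qed
    show "\<forall>x\<in>V. \<forall>y\<in>V. inner (P x) y = inner x (P y)"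
    proof (intro ballI)
      fix x y assume x: "x \<in> V" and y: "y \<in> V"
      have "inner (P x) y = inner (T x) y + M * (\<Sum>b\<in>B. inner x (pb b) * inner y (pb b))"
        unfolding P_def using oproj_inner[OF sV cV y] by (simp add: inner_add_left gx)
      moreover have "inner x (P y) = inner x (T y) + M * (\<Sum>b\<in>B. inner y (pb b) * inner x (pb b))"
        unfolding P_def using oproj_inner2[OF sV cV x] gx[of y x] by (simp add: inner_add_right inner_commute[of x "g y"])
      moreover have "inner (T x) y = inner x (T y)" using sa unfolding selfadjoint_def by blast
      ultimately show "inner (P x) y = inner x (P y)" by (simp add: mult.commute)
    qed
    show "\<forall>x\<in>V. x \<noteq> 0 \<longrightarrow> inner (P x) x > 0"
    proof (intro ballI impI)
      fix x assume "x \<in> V" "x \<noteq> 0"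
      then have "c * (norm x)\<^sup>2 > 0" using c by simp
      then show "inner (P x) x > 0" using coer \<open>x \<in> V\<close> by (meson less_le_trans)
    qed
  qed
  define r where "r = M * (\<Sum>b\<in>B. norm (pb b))"
  define Cs where "Cs = {\<Sum>b\<in>B. f b *\<^sub>R pb b | f. \<forall>b\<in>B. \<bar>f b\<bar> \<le> r}"
  have cCs: "compact Cs" unfolding Cs_def by (rule compact_box_sums[OF fB])
  have sub: "K ` (V \<inter> cball 0 1) \<subseteq> Cs"
  proof
    fix z assume "z \<in> K ` (V \<inter> cball 0 1)"
    then obtain x where x: "x \<in> V" "norm x \<le> 1" and z: "z = K x" by auto
    have "z = (\<Sum>b\<in>B. (- M * inner x (pb b)) *\<^sub>R pb b)"
      unfolding z K_def g_def by (simp add: scaleR_sum_right sum_negf)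
    moreover have "\<bar>- M * inner x (pb b)\<bar> \<le> r" if b: "b \<in> B" for b
    proof -
      have "\<bar>- M * inner x (pb b)\<bar> = M * \<bar>inner x (pb b)\<bar>" using M by (simp add: abs_mult)
      also have "\<dots> \<le> M * (norm x * norm (pb b))"
        by (rule mult_left_mono[OF Cauchy_Schwarz_ineq2 M])
      also have "\<dots> \<le> M * norm (pb b)"
        using x(2) by (intro mult_left_mono M) (simp add: mult_left_le_one_le)
      also have "\<dots> \<le> r" unfolding r_def
        by (intro mult_left_mono M member_le_sum b fB) simp
      finally show ?thesis .
    qed
    ultimately show "z \<in> Cs" unfolding Cs_def
      by (intro CollectI exI[of _ "\<lambda>b. - M * inner x (pb b)"]) auto
  qed
  have "closure (K ` (V \<inter> cball 0 1)) \<subseteq> Cs"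
    by (rule closure_minimal[OF sub compact_imp_closed[OF cCs]])
  then have "closure (K ` (V \<inter> cball 0 1)) = Cs \<inter> closure (K ` (V \<inter> cball 0 1))" by blast
  then have cK: "compact (closure (K ` (V \<inter> cball 0 1)))"
    using compact_Int_closed[OF cCs closed_closure] by metis
  have cop: "compact_op_on V K"
    unfolding compact_op_on_def
  proof (intro conjI)
    show "linear_on_sub V K" unfolding linear_on_sub_def
      using linear_add[OF linK] linear_scale[OF linK] by blast
    show "K ` V \<subseteq> V" using KV by blast
    show "compact (closure (K ` (V \<inter> cball 0 1)))" by (rule cK)
  qed
  have rep: "\<forall>x\<in>V. \<forall>y\<in>V. inner (T x) y = inner (P x + K x) y"
  proof (intro ballI)
    fix x y assume "x \<in> V" "y \<in> V"
    have "P x + K x = oproj V (T x)" by (simp add: P_def K_def)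
    then show "inner (T x) y = inner (P x + K x) y" using oproj_inner[OF sV cV \<open>y \<in> V\<close>] by simp
  qed
  show ?thesis unfolding ess_pos_def using pos_iso cop rep by blast
qed

lemma sq_sum_le: "((a::real) + d)\<^sup>2 \<le> 2 * a\<^sup>2 + 2 * d\<^sup>2"
proof -
  have "0 \<le> (a - d)\<^sup>2" by simp
  then show ?thesis by (simp add: power2_eq_square algebra_simps)
qed

lemma perturb:
  fixes T :: "'a::{real_inner,complete_space} \<Rightarrow>\<^sub>L 'a"
  assumes sV: "subspace V" and cV: "closed V" and SV: "S \<subseteq> V" and fB: "finite B"
    and c: "c > 0" and M: "M \<ge> 0" and G: "GD T V S B c M"
  shows "\<exists>\<delta>>0. \<forall>T' V'. subspace V' \<longrightarrow> closed V' \<longrightarrow> norm (T - T') + gdist V V' < \<delta> \<longrightarrow>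
           GD T' V' S B (c/2) (2*M)"
proof -
  define t where "t = norm T"
  define \<beta> where "\<beta> = (\<Sum>b\<in>B. (norm b)\<^sup>2)"
  define KK where "KK = 2*c + 2*M*\<beta> + 2*t + 1"
  have t0: "t \<ge> 0" by (simp add: t_def)
  have b0: "\<beta> \<ge> 0" by (simp add: \<beta>_def sum_nonneg)
  have KK1: "KK \<ge> 1" using c M t0 b0 by (simp add: KK_def)
  define \<delta> where "\<delta> = min 1 (c / (2 * KK))"
  have d0: "\<delta> > 0" using c KK1 by (simp add: \<delta>_def)
  have d1: "\<delta> \<le> 1" by (simp add: \<delta>_def)
  have dK: "\<delta> * KK \<le> c / 2"
  proof -
    have "\<delta> \<le> c / (2 * KK)" by (simp add: \<delta>_def)
    then have "\<delta> * KK \<le> c / (2 * KK) * KK" using KK1 by (intro mult_right_mono) auto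
    also have "\<dots> = c / 2" using KK1 by simp
    finally show ?thesis .
  qed
  have "GD T' V' S B (c/2) (2*M)"
    if sV': "subspace V'" and cV': "closed V'" and small: "norm (T - T') + gdist V V' < \<delta>" for T' V'
    unfolding GD_def
  proof (intro ballI impI)
    fix x assume xV': "x \<in> V'" and xS: "\<forall>s\<in>S. inner x s = 0"
    define \<tau> where "\<tau> = norm (T - T')"
    define g where "g = gdist V V'"
    define n where "n = norm x"
    define y where "y = oproj V x"
    define e where "e = y - x"
    have tau0: "\<tau> \<ge> 0" by (simp add: \<tau>_def)
    have g0: "g \<ge> 0" unfolding g_def by (rule gdist_nonneg[OF sV cV sV' cV'])
    have n0: "n \<ge> 0" by (simp add: n_def)
    have gt: "g + \<tau> < \<delta>" using small by (simp add: g_def \<tau>_def)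
    have g1: "g \<le> 1" using gt tau0 d1 by linarith
    have xx: "oproj V' x = x" by (rule oproj_id[OF sV' cV' xV'])
    have ne: "norm e \<le> g * n"
      using gdist_bound[OF sV cV sV' cV', of x] by (simp add: xx e_def y_def g_def n_def)
    have yV: "y \<in> V" unfolding y_def by (rule oproj_in[OF sV cV])
    have ny: "norm y \<le> n" unfolding y_def n_def by (rule oproj_norm[OF sV cV])
    have ny2: "norm y \<ge> (1 - g) * n"
    proof -
      have "x = y - e" by (simp add: e_def)
      then have "n \<le> norm y + norm e" unfolding n_def by (metis norm_triangle_ineq4)
      then show ?thesis using ne by (simp add: algebra_simps)
    qed
    have yS: "\<forall>s\<in>S. inner y s = 0"
      using xS SV oproj_inner[OF sV cV] by (auto simp: y_def)
    have Gy: "c * (norm y)\<^sup>2 - M * (\<Sum>b\<in>B. (inner y b)\<^sup>2) \<le> inner (T y) y"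
      using G yV yS unfolding GD_def by blast
    have sumy: "(\<Sum>b\<in>B. (inner y b)\<^sup>2) \<le> 2 * (\<Sum>b\<in>B. (inner x b)\<^sup>2) + 2 * g\<^sup>2 * n\<^sup>2 * \<beta>"
    proof -
      have "(inner y b)\<^sup>2 \<le> 2 * (inner x b)\<^sup>2 + 2 * (g\<^sup>2 * n\<^sup>2 * (norm b)\<^sup>2)" for b
      proof -
        have "inner y b = inner x b + inner e b" by (simp add: e_def inner_diff_left)
        then have "(inner y b)\<^sup>2 \<le> 2 * (inner x b)\<^sup>2 + 2 * (inner e b)\<^sup>2" using sq_sum_le by simp
        moreover have "\<bar>inner e b\<bar> \<le> g * n * norm b"
        proof -
          have "\<bar>inner e b\<bar> \<le> norm e * norm b" by (rule Cauchy_Schwarz_ineq2)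
          also have "\<dots> \<le> g * n * norm b" using ne by (intro mult_right_mono) auto
          finally show ?thesis .
        qed
        then have "(inner e b)\<^sup>2 \<le> (g * n * norm b)\<^sup>2"
          by (metis abs_ge_zero power2_abs power_mono)
        ultimately show ?thesis by (simp add: power_mult_distrib)
      qed
      then have "(\<Sum>b\<in>B. (inner y b)\<^sup>2) \<le> (\<Sum>b\<in>B. 2 * (inner x b)\<^sup>2 + 2 * (g\<^sup>2 * n\<^sup>2 * (norm b)\<^sup>2))"
        by (rule sum_mono)
      also have "\<dots> = 2 * (\<Sum>b\<in>B. (inner x b)\<^sup>2) + 2 * g\<^sup>2 * n\<^sup>2 * \<beta>"
        by (simp add: sum.distrib sum_distrib_left \<beta>_def mult.assoc)
      finally show ?thesis .
    qed
    have Tx: "inner (T y) y - 2 * t * g * n\<^sup>2 \<le> inner (T x) x"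
    proof -
      have "inner (T y) y = inner (T x) x + inner (T x) e + inner (T e) y"
        by (simp add: e_def blinfun.diff_right inner_diff_left inner_diff_right algebra_simps)
      moreover have "\<bar>inner (T x) e\<bar> \<le> t * g * n\<^sup>2"
      proof -
        have "\<bar>inner (T x) e\<bar> \<le> norm (T x) * norm e" by (rule Cauchy_Schwarz_ineq2)
        also have "\<dots> \<le> (t * n) * (g * n)"
          using ne norm_blinfun[of T x] by (intro mult_mono) (auto simp: t_def n_def)
        finally show ?thesis by (simp add: power2_eq_square algebra_simps)
      qed
      moreover have "\<bar>inner (T e) y\<bar> \<le> t * g * n\<^sup>2"
      proof -
        have "\<bar>inner (T e) y\<bar> \<le> norm (T e) * norm y" by (rule Cauchy_Schwarz_ineq2)
        also have "\<dots> \<le> (t * (g * n)) * n"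
        proof (rule mult_mono)
          have "norm (T e) \<le> t * norm e" using norm_blinfun[of T e] by (simp add: t_def)
          also have "\<dots> \<le> t * (g * n)" using ne t0 by (rule mult_left_mono)
          finally show "norm (T e) \<le> t * (g * n)" .
        qed (use ny t0 g0 n0 in auto)
        finally show ?thesis by (simp add: power2_eq_square algebra_simps)
      qed
      ultimately show ?thesis by linarith
    qed
    have T'x: "inner (T x) x - \<tau> * n\<^sup>2 \<le> inner (T' x) x"
    proof -
      have "inner (T x) x - inner (T' x) x = inner ((T - T') x) x"
        by (simp add: blinfun.diff_left inner_diff_left)
      also have "\<dots> \<le> norm ((T - T') x) * norm x" by (rule norm_cauchy_schwarz)
      also have "\<dots> \<le> (\<tau> * n) * n"
        using norm_blinfun[of "T - T'" x] unfolding \<tau>_def n_def by (rule mult_right_mono) simp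
      finally show ?thesis by (simp add: power2_eq_square algebra_simps)
    qed
    have yy: "(1 - 2 * g) * n\<^sup>2 \<le> (norm y)\<^sup>2"
    proof -
      have "((1 - g) * n)\<^sup>2 \<le> (norm y)\<^sup>2" using ny2 g1 n0 by (intro power_mono) auto
      moreover have "(1 - 2 * g) * n\<^sup>2 \<le> ((1 - g) * n)\<^sup>2"
      proof -
        have "(1 - 2 * g) \<le> (1 - g)\<^sup>2" by (simp add: power2_eq_square algebra_simps)
        then have "(1 - 2 * g) * n\<^sup>2 \<le> (1 - g)\<^sup>2 * n\<^sup>2" by (rule mult_right_mono) simp
        then show ?thesis by (simp add: power_mult_distrib)
      qed
      ultimately show ?thesis by linarith
    qed
    have cy: "c * ((1 - 2 * g) * n\<^sup>2) \<le> c * (norm y)\<^sup>2" using yy c by (intro mult_left_mono) auto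
    have My: "M * (\<Sum>b\<in>B. (inner y b)\<^sup>2) \<le> M * (2 * (\<Sum>b\<in>B. (inner x b)\<^sup>2) + 2 * g\<^sup>2 * n\<^sup>2 * \<beta>)"
      using sumy M by (rule mult_left_mono)
    have gg: "M * (2 * g\<^sup>2 * n\<^sup>2 * \<beta>) \<le> M * (2 * g * n\<^sup>2 * \<beta>)"
    proof -
      have "g\<^sup>2 \<le> g" using g0 g1 by (simp add: power2_eq_square mult_left_le_one_le)
      then have "2 * g\<^sup>2 * (n\<^sup>2 * \<beta>) \<le> 2 * g * (n\<^sup>2 * \<beta>)" using b0 by (intro mult_right_mono) auto
      then show ?thesis using M by (intro mult_left_mono) (auto simp: algebra_simps)
    qed
    have coef: "c/2 \<le> c - 2 * c * g - 2 * M * g * \<beta> - 2 * t * g - \<tau>"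
    proof -
      have "2 * c * g + 2 * M * g * \<beta> + 2 * t * g + \<tau> \<le> (g + \<tau>) * KK"
      proof -
        have "(g + \<tau>) * KK = g * (2*c + 2*M*\<beta> + 2*t) + g + \<tau> * KK" by (simp add: KK_def algebra_simps)
        moreover have "\<tau> \<le> \<tau> * KK" using tau0 KK1 by (simp add: mult_le_cancel_left1)
        ultimately show ?thesis using g0 by (simp add: algebra_simps)
      qed
      also have "\<dots> \<le> \<delta> * KK" using gt KK1 by (intro mult_right_mono) auto
      finally show ?thesis using dK by linarith
    qed
    have "c / 2 * n\<^sup>2 \<le> (c - 2 * c * g - 2 * M * g * \<beta> - 2 * t * g - \<tau>) * n\<^sup>2"
      using coef by (rule mult_right_mono) simp
    then have fin: "c / 2 * n\<^sup>2 \<le> c * ((1 - 2 * g) * n\<^sup>2) - M * (2 * g * n\<^sup>2 * \<beta>) - 2 * t * g * n\<^sup>2 - \<tau> * n\<^sup>2"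
      by (simp add: algebra_simps)
    show "c / 2 * (norm x)\<^sup>2 - 2 * M * (\<Sum>b\<in>B. (inner x b)\<^sup>2) \<le> inner (T' x) x"
      using fin cy My gg Gy Tx T'x unfolding n_def[symmetric] by (simp add: algebra_simps)
  qed
  then show ?thesis using d0 by blast
qed

lemma form_ker_subspace:
  fixes T :: "'a::real_inner \<Rightarrow>\<^sub>L 'a"
  assumes sV: "subspace V"
  shows "subspace (form_ker T V)"
  unfolding subspace_def form_ker_def
  using sV by (auto simp: subspace_0 subspace_add subspace_scale blinfun.add_right blinfun.scaleR_right
      inner_add_left)

lemma form_ker_inner: "k \<in> form_ker T V \<Longrightarrow> y \<in> V \<Longrightarrow> inner (T k) y = 0"
  by (simp add: form_ker_def)

lemma count_bound:
  fixes T :: "'a::real_inner \<Rightarrow>\<^sub>L 'a"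
  assumes sa: "selfadjoint T" and sV: "subspace V" and fS: "finite S"
    and pos: "\<forall>x\<in>V. (\<forall>s\<in>S. inner x s = 0) \<longrightarrow> x \<noteq> 0 \<longrightarrow> inner (T x) x > 0"
  shows "n_minus T V + edim (form_ker T V) \<le> enat (card S)"
proof -
  define K where "K = form_ker T V"
  have sK: "subspace K" unfolding K_def by (rule form_ker_subspace[OF sV])
  have KV: "K \<subseteq> V" unfolding K_def form_ker_def by auto
  have inner_bound: "card E1 + card E2 \<le> card S"
    if W: "subspace W" "W \<subseteq> V" "\<forall>x\<in>W. x \<noteq> 0 \<longrightarrow> inner (T x) x < 0"
      and E1: "finite E1" "independent E1" "E1 \<subseteq> W"
      and E2: "finite E2" "independent E2" "E2 \<subseteq> K" for W E1 E2
  proof -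
    have sp1: "span E1 \<subseteq> W" using W(1) E1(3) by (simp add: span_minimal)
    have sp2: "span E2 \<subseteq> K" using sK E2(3) by (simp add: span_minimal)
    have "span E1 \<inter> span E2 \<subseteq> {0}"
    proof
      fix z assume z: "z \<in> span E1 \<inter> span E2"
      then have "z \<in> K" "z \<in> W" using sp1 sp2 by auto
      then have "inner (T z) z = 0" using KV unfolding K_def by (auto simp: form_ker_def)
      then have "z = 0" using W(3) \<open>z \<in> W\<close> by (metis less_irrefl)
      then show "z \<in> {0}" by simp
    qed
    then have iu: "independent (E1 \<union> E2) \<and> E1 \<inter> E2 = {}"
      using indep_union[OF E2(1) E1(2) E2(2)] by blast
    have "\<forall>x\<in>span (E1 \<union> E2). (\<forall>s\<in>S. inner x s = 0) \<longrightarrow> x = 0"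
    proof (intro ballI impI)
      fix x assume x: "x \<in> span (E1 \<union> E2)" and xS: "\<forall>s\<in>S. inner x s = 0"
      then obtain a k where ak: "x = a + k" "a \<in> span E1" "k \<in> span E2" by (auto simp: span_Un)
      have aW: "a \<in> W" and kK: "k \<in> K" using ak sp1 sp2 by auto
      have aV: "a \<in> V" and kV: "k \<in> V" using aW kK W(2) KV by auto
      have xV: "x \<in> V" using aV kV ak(1) sV by (simp add: subspace_add)
      have k1: "inner (T k) a = 0" and k2: "inner (T k) k = 0"
        using kK aV kV unfolding K_def by (auto simp: form_ker_def)
      have k3: "inner (T a) k = 0" using sa k1 unfolding selfadjoint_def by (simp add: inner_commute)
      have "inner (T x) x = inner (T a) a"
        using k1 k2 k3 by (simp add: ak(1) blinfun.add_right inner_add_left inner_add_right)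
      moreover have "inner (T a) a \<le> 0" using W(3) aW by (cases "a = 0") (auto intro: less_imp_le)
      ultimately have le: "inner (T x) x \<le> 0" by simp
      show "x = 0"
      proof (rule ccontr)
        assume "x \<noteq> 0"
        then have "inner (T x) x > 0" using pos xV xS by blast
        then show False using le by simp
      qed
    qed
    then have "finite (E1 \<union> E2) \<and> card (E1 \<union> E2) \<le> card S"
      using card_le_orth[OF fS, of "E1 \<union> E2"] iu by simp
    then have "card (E1 \<union> E2) \<le> card S" by simp
    then show ?thesis using iu E1(1) E2(1) by (simp add: card_Un_disjoint)
  qed
  have edims: "edim W + edim K \<le> enat (card S)"
    if W: "subspace W" "W \<subseteq> V" "\<forall>x\<in>W. x \<noteq> 0 \<longrightarrow> inner (T x) x < 0" for W
    unfolding edim_def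
  proof (rule sup_add_bound)
    have "enat (card ({}::'a set)) \<in> {enat (card E) |E. finite E \<and> independent E \<and> E \<subseteq> W}"
      by (intro CollectI exI[of _ "{}"]) (simp add: independent_empty)
    then show "{enat (card E) |E. finite E \<and> independent E \<and> E \<subseteq> W} \<noteq> {}" by (metis empty_iff)
    have "enat (card ({}::'a set)) \<in> {enat (card E) |E. finite E \<and> independent E \<and> E \<subseteq> K}"
      by (intro CollectI exI[of _ "{}"]) (simp add: independent_empty)
    then show "{enat (card E) |E. finite E \<and> independent E \<and> E \<subseteq> K} \<noteq> {}" by (metis empty_iff)
    fix x y assume "x \<in> {enat (card E) |E. finite E \<and> independent E \<and> E \<subseteq> W}"
      "y \<in> {enat (card E) |E. finite E \<and> independent E \<and> E \<subseteq> K}"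
    then obtain E1 E2 where E: "x = enat (card E1)" "finite E1" "independent E1" "E1 \<subseteq> W"
      "y = enat (card E2)" "finite E2" "independent E2" "E2 \<subseteq> K" by auto
    have "card E1 + card E2 \<le> card S" by (rule inner_bound[OF W E(2-4) E(6-8)])
    then show "x + y \<le> enat (card S)" using E by simp
  qed
  have "Sup {edim W | W. subspace W \<and> W \<subseteq> V \<and> (\<forall>x\<in>W. x \<noteq> 0 \<longrightarrow> inner (T x) x < 0)} + Sup {edim K}
      \<le> enat (card S)"
  proof (rule sup_add_bound)
    have "subspace {0::'a}" by (simp add: subspace_def)
    moreover have "{0::'a} \<subseteq> V" using sV by (simp add: subspace_0)
    ultimately have "edim {0::'a} \<in> {edim W | W. subspace W \<and> W \<subseteq> V \<and> (\<forall>x\<in>W. x \<noteq> 0 \<longrightarrow> inner (T x) x < 0)}"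
      by (intro CollectI exI[of _ "{0}"]) simp
    then show "{edim W | W. subspace W \<and> W \<subseteq> V \<and> (\<forall>x\<in>W. x \<noteq> 0 \<longrightarrow> inner (T x) x < 0)} \<noteq> {}"
      by (metis empty_iff)
    show "{edim K} \<noteq> {}" by simp
    fix x y assume "x \<in> {edim W | W. subspace W \<and> W \<subseteq> V \<and> (\<forall>x\<in>W. x \<noteq> 0 \<longrightarrow> inner (T x) x < 0)}"
      "y \<in> {edim K}"
    then obtain W where W: "x = edim W" "subspace W" "W \<subseteq> V" "\<forall>z\<in>W. z \<noteq> 0 \<longrightarrow> inner (T z) z < 0" "y = edim K"
      by auto
    have "x + y = edim W + edim K" using W by simp
    also have "\<dots> \<le> enat (card S)" by (rule edims[OF W(2-4)])
    finally show "x + y \<le> enat (card S)" .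
  qed
  then show ?thesis unfolding n_minus_def K_def by simp
qed

lemma GD_pos:
  assumes "GD T V {} B c M" "c > 0"
  shows "\<forall>x\<in>V. (\<forall>s\<in>B. inner x s = 0) \<longrightarrow> x \<noteq> 0 \<longrightarrow> inner (T x) x > 0"
proof (intro ballI impI)
  fix x assume x: "x \<in> V" "\<forall>s\<in>B. inner x s = 0" "x \<noteq> 0"
  have "c * (norm x)\<^sup>2 - M * (\<Sum>b\<in>B. (inner x b)\<^sup>2) \<le> inner (T x) x" using assms x unfolding GD_def by blast
  moreover have "(\<Sum>b\<in>B. (inner x b)\<^sup>2) = 0" using x by simp
  moreover have "c * (norm x)\<^sup>2 > 0" using x assms by simp
  ultimately show "inner (T x) x > 0" by simp
qed

lemma AA_GD:
  assumes "(T, V) \<in> AA"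
  shows "\<exists>B c M. finite B \<and> c > 0 \<and> M \<ge> 0 \<and> GD T V {} B c M"
  using assms ess_pos_GD unfolding AA_def Gr_def by blast

lemma part2:
  fixes T :: "'a::{real_inner,complete_space} \<Rightarrow>\<^sub>L 'a"
  assumes "(T, V) \<in> AA"
  shows "n_minus T V \<noteq> \<infinity> \<and> edim (form_ker T V) \<noteq> \<infinity>"
proof -
  obtain B c M where B: "finite B" "c > 0" "M \<ge> 0" "GD T V {} B c M" using AA_GD[OF assms] by blast
  have sa: "selfadjoint T" and sV: "subspace V" using assms by (auto simp: AA_def Bs_def Gr_def)
  have "n_minus T V + edim (form_ker T V) \<le> enat (card B)"
    by (rule count_bound[OF sa sV B(1) GD_pos[OF B(4) B(2)]])
  then show ?thesis by (auto simp: plus_enat_def split: enat.splits)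
qed

lemma quad_diff:
  fixes T :: "'a::real_inner \<Rightarrow>\<^sub>L 'a"
  shows "\<bar>inner (T y) y - inner (T x) x\<bar> \<le> norm T * norm (y - x) * (norm x + norm y)"
proof -
  have eq: "inner (T y) y - inner (T x) x = inner (T (y - x)) y + inner (T x) (y - x)"
    by (simp add: blinfun.diff_right inner_diff_left inner_diff_right)
  have a: "\<bar>inner (T (y - x)) y\<bar> \<le> norm T * norm (y - x) * norm y"
  proof -
    have "\<bar>inner (T (y - x)) y\<bar> \<le> norm (T (y - x)) * norm y" by (rule Cauchy_Schwarz_ineq2)
    also have "\<dots> \<le> norm T * norm (y - x) * norm y" by (rule mult_right_mono[OF norm_blinfun]) simp
    finally show ?thesis .
  qed
  have b: "\<bar>inner (T x) (y - x)\<bar> \<le> norm T * norm (y - x) * norm x"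
  proof -
    have "\<bar>inner (T x) (y - x)\<bar> \<le> norm (T x) * norm (y - x)" by (rule Cauchy_Schwarz_ineq2)
    also have "\<dots> \<le> norm T * norm x * norm (y - x)" by (rule mult_right_mono[OF norm_blinfun]) simp
    finally show ?thesis by (simp add: algebra_simps)
  qed
  have "\<bar>inner (T y) y - inner (T x) x\<bar> \<le> \<bar>inner (T (y - x)) y\<bar> + \<bar>inner (T x) (y - x)\<bar>"
    unfolding eq by (rule abs_triangle_ineq)
  also have "\<dots> \<le> norm T * norm (y - x) * norm y + norm T * norm (y - x) * norm x" using a b by simp
  finally show ?thesis by (simp add: algebra_simps)
qed

lemma negdef_uniform:
  fixes T :: "'a::real_inner \<Rightarrow>\<^sub>L 'a"
  assumes fE: "finite E" and iE: "independent E" and ne: "E \<noteq> {}"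
    and neg: "\<forall>x\<in>span E. x \<noteq> 0 \<longrightarrow> inner (T x) x < 0"
  shows "\<exists>c>0. \<forall>x\<in>span E. inner (T x) x \<le> - c * (norm x)\<^sup>2"
proof -
  define C where "C A = {\<Sum>a\<in>A. f a *\<^sub>R a | f. \<forall>a\<in>A. \<bar>f a\<bar> \<le> 1}" for A :: "'a set"
  define Z where "Z = (\<Union>e0\<in>E. \<Union>\<sigma>\<in>{-1,1::real}. (\<lambda>y. \<sigma> *\<^sub>R e0 + y) ` C (E - {e0}))"
  have cC: "compact (C A)" if "finite A" for A
    unfolding C_def using compact_box_sums[OF that, of "\<lambda>b. b" 1] by simp
  have cZ: "compact Z" unfolding Z_def
  proof (intro compact_UN)
    show "finite E" by (rule fE)
    show "finite {-1, 1::real}" by simp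
    fix e0 \<sigma> assume "e0 \<in> E"
    have "continuous_on (C (E - {e0})) (\<lambda>y. \<sigma> *\<^sub>R e0 + y)" by (intro continuous_intros)
    then show "compact ((\<lambda>y. \<sigma> *\<^sub>R e0 + y) ` C (E - {e0}))"
      using cC[of "E - {e0}"] fE by (intro compact_continuous_image) auto
  qed
  have memZ: "\<sigma> *\<^sub>R e0 + (\<Sum>a\<in>E - {e0}. f a *\<^sub>R a) \<in> Z"
    if "e0 \<in> E" "\<sigma> \<in> {-1, 1}" "\<forall>a\<in>E - {e0}. \<bar>f a\<bar> \<le> 1" for e0 \<sigma> f
  proof -
    have "(\<Sum>a\<in>E - {e0}. f a *\<^sub>R a) \<in> C (E - {e0})" unfolding C_def using that(3) by blast
    then have "\<sigma> *\<^sub>R e0 + (\<Sum>a\<in>E - {e0}. f a *\<^sub>R a) \<in> (\<lambda>y. \<sigma> *\<^sub>R e0 + y) ` C (E - {e0})" by (rule imageI)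
    then show ?thesis unfolding Z_def using that(1,2) by blast
  qed
  have Zcases: "\<exists>e0 \<sigma> f. z = \<sigma> *\<^sub>R e0 + (\<Sum>a\<in>E - {e0}. f a *\<^sub>R a) \<and> e0 \<in> E \<and> \<sigma> \<in> {-1, 1}"
    if "z \<in> Z" for z
    using that unfolding Z_def C_def by blast
  have Zspan: "z \<in> span E" if zZ: "z \<in> Z" for z
  proof -
    obtain e0 \<sigma> f where z: "z = \<sigma> *\<^sub>R e0 + (\<Sum>a\<in>E - {e0}. f a *\<^sub>R a)" "e0 \<in> E"
      using Zcases[OF zZ] by blast
    have "\<sigma> *\<^sub>R e0 \<in> span E" using z(2) by (intro span_scale span_base)
    moreover have "(\<Sum>a\<in>E - {e0}. f a *\<^sub>R a) \<in> span E"
      by (intro span_sum span_scale) (auto intro: span_base)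
    ultimately show ?thesis unfolding z(1) by (rule span_add)
  qed
  have Z0: "z \<noteq> 0" if zZ: "z \<in> Z" for z
  proof
    assume z0: "z = 0"
    obtain e0 \<sigma> f where z: "z = \<sigma> *\<^sub>R e0 + (\<Sum>a\<in>E - {e0}. f a *\<^sub>R a)" "e0 \<in> E" "\<sigma> \<in> {-1, 1}"
      using Zcases[OF zZ] by blast
    define u where "u = f(e0 := \<sigma>)"
    have "(\<Sum>a\<in>E. u a *\<^sub>R a) = u e0 *\<^sub>R e0 + (\<Sum>a\<in>E - {e0}. u a *\<^sub>R a)"
      using fE z(2) by (simp add: sum.remove)
    also have "(\<Sum>a\<in>E - {e0}. u a *\<^sub>R a) = (\<Sum>a\<in>E - {e0}. f a *\<^sub>R a)"
      by (intro sum.cong) (auto simp: u_def)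
    finally have "(\<Sum>a\<in>E. u a *\<^sub>R a) = 0" using z z0 by (simp add: u_def)
    moreover have "u e0 \<noteq> 0" using z(3) by (auto simp: u_def)
    ultimately have "dependent E" unfolding dependent_finite[OF fE] using z(2) by blast
    then show False using iE by simp
  qed
  obtain e1 where e1: "e1 \<in> E" using ne by blast
  have "1 *\<^sub>R e1 + (\<Sum>a\<in>E - {e1}. 0 *\<^sub>R a) \<in> Z" by (rule memZ[OF e1]) auto
  then have Zne: "Z \<noteq> {}" by (metis empty_iff)
  have cont: "continuous_on Z (\<lambda>z. inner (T z) z)"
  proof -
    have "continuous_on Z (blinfun_apply T)"
      by (rule linear_continuous_on[OF blinfun.bounded_linear_right])
    then show ?thesis by (intro continuous_intros)
  qed
  obtain zs where zs: "zs \<in> Z" "\<forall>z\<in>Z. inner (T z) z \<le> inner (T zs) zs"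
    using continuous_attains_sup[OF cZ Zne cont] by blast
  define \<mu> where "\<mu> = inner (T zs) zs"
  have mu: "\<mu> < 0" unfolding \<mu>_def using neg Zspan[OF zs(1)] Z0[OF zs(1)] by blast
  obtain R where R: "R > 0" "\<forall>z\<in>Z. norm z \<le> R"
    using compact_imp_bounded[OF cZ] unfolding bounded_pos by blast
  define c where "c = - \<mu> / R\<^sup>2"
  have c: "c > 0" using mu R by (simp add: c_def divide_neg_pos)
  have "inner (T x) x \<le> - c * (norm x)\<^sup>2" if x: "x \<in> span E" for x
  proof (cases "x = 0")
    case True
    then show ?thesis by simp
  next
    case False
    obtain u where xu: "x = (\<Sum>a\<in>E. u a *\<^sub>R a)" using x span_finite[OF fE] by blast
    define lm where "lm = Max ((\<lambda>a. \<bar>u a\<bar>) ` E)"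
    have fin: "finite ((\<lambda>a. \<bar>u a\<bar>) ` E)" using fE by simp
    have lin: "lm \<in> (\<lambda>a. \<bar>u a\<bar>) ` E" unfolding lm_def using fin ne by (intro Max_in) auto
    then obtain e0 where e0: "e0 \<in> E" "\<bar>u e0\<bar> = lm" by auto
    have le: "\<bar>u a\<bar> \<le> lm" if "a \<in> E" for a unfolding lm_def using fin that by (intro Max_ge) auto
    have lpos: "lm > 0"
    proof (rule ccontr)
      assume "\<not> lm > 0"
      then have l0: "lm \<le> 0" by simp
      have "\<forall>a\<in>E. u a = 0"
      proof
        fix a assume "a \<in> E"
        then have "\<bar>u a\<bar> \<le> lm" by (rule le)
        then show "u a = 0" using l0 by simp
      qed
      then have "x = 0" unfolding xu by simp
      then show False using False by simp
    qed
    define \<sigma> where "\<sigma> = u e0 / lm"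
    have sig: "\<sigma> \<in> {-1, 1}"
    proof (cases "u e0 \<ge> 0")
      case True
      then have "u e0 = lm" using e0(2) by simp
      then show ?thesis using lpos by (simp add: \<sigma>_def)
    next
      case False
      then have "u e0 = - lm" using e0(2) by simp
      then show ?thesis using lpos by (simp add: \<sigma>_def)
    qed
    define z where "z = (1 / lm) *\<^sub>R x"
    have xs: "x = u e0 *\<^sub>R e0 + (\<Sum>a\<in>E - {e0}. u a *\<^sub>R a)"
      unfolding xu using fE e0(1) by (simp add: sum.remove)
    have "z = (1 / lm) *\<^sub>R (u e0 *\<^sub>R e0 + (\<Sum>a\<in>E - {e0}. u a *\<^sub>R a))"
      unfolding z_def by (subst xs) (rule refl)
    also have "\<dots> = ((1 / lm) * u e0) *\<^sub>R e0 + (\<Sum>a\<in>E - {e0}. ((1 / lm) * u a) *\<^sub>R a)"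
      by (simp add: scaleR_add_right scaleR_sum_right)
    also have "\<dots> = \<sigma> *\<^sub>R e0 + (\<Sum>a\<in>E - {e0}. (u a / lm) *\<^sub>R a)"
      by (simp add: \<sigma>_def)
    finally have zeq: "z = \<sigma> *\<^sub>R e0 + (\<Sum>a\<in>E - {e0}. (u a / lm) *\<^sub>R a)" .
    have bnd: "\<forall>a\<in>E - {e0}. \<bar>u a / lm\<bar> \<le> 1"
    proof
      fix a assume "a \<in> E - {e0}"
      then have "\<bar>u a\<bar> \<le> lm" using le by simp
      then show "\<bar>u a / lm\<bar> \<le> 1" using lpos by (simp add: field_simps)
    qed
    have zZ: "z \<in> Z" unfolding zeq by (rule memZ[where f="\<lambda>a. u a / lm", OF e0(1) sig bnd])
    have xz: "x = lm *\<^sub>R z" using lpos by (simp add: z_def)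
    have qz: "inner (T z) z \<le> \<mu>" using zs(2) zZ by (simp add: \<mu>_def)
    have qx: "inner (T x) x = lm\<^sup>2 * inner (T z) z"
      by (simp add: xz power2_eq_square blinfun.scaleR_right)
    have nx: "(norm x)\<^sup>2 \<le> lm\<^sup>2 * R\<^sup>2"
    proof -
      have "norm x = lm * norm z" using lpos by (simp add: xz)
      also have "\<dots> \<le> lm * R" using R zZ lpos by (intro mult_left_mono) auto
      finally have "norm x \<le> lm * R" .
      then have "(norm x)\<^sup>2 \<le> (lm * R)\<^sup>2" by (rule power_mono) simp
      then show ?thesis by (simp add: power_mult_distrib)
    qed
    have "inner (T x) x \<le> lm\<^sup>2 * \<mu>" unfolding qx by (rule mult_left_mono[OF qz]) simp
    also have "lm\<^sup>2 * \<mu> = (\<mu> / R\<^sup>2) * (lm\<^sup>2 * R\<^sup>2)" using R by (simp add: field_simps)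
    also have "\<dots> \<le> (\<mu> / R\<^sup>2) * (norm x)\<^sup>2"
      using nx mu R by (intro mult_left_mono_neg) (auto simp: divide_nonpos_pos)
    also have "\<mu> / R\<^sup>2 = - c" by (simp add: c_def)
    finally show ?thesis .
  qed
  then show ?thesis using c by blast
qed

lemma n_minus_attained:
  fixes T :: "'a::real_inner \<Rightarrow>\<^sub>L 'a"
  assumes sV: "subspace V" and nm: "n_minus T V = enat n"
  shows "\<exists>E. finite E \<and> independent E \<and> card E = n \<and> span E \<subseteq> V \<and>
           (\<forall>x\<in>span E. x \<noteq> 0 \<longrightarrow> inner (T x) x < 0)"
proof -
  define X where "X = {edim W | W. subspace W \<and> W \<subseteq> V \<and> (\<forall>x\<in>W. x \<noteq> 0 \<longrightarrow> inner (T x) x < 0)}"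
  have SX: "Sup X = enat n" using nm unfolding n_minus_def X_def by simp
  have "subspace {0::'a}" by (simp add: subspace_def)
  moreover have "{0::'a} \<subseteq> V" using sV by (simp add: subspace_0)
  ultimately have "edim {0::'a} \<in> X" unfolding X_def by (intro CollectI exI[of _ "{0}"]) simp
  then have Xne: "X \<noteq> {}" by (metis empty_iff)
  have Xb: "x \<le> enat n" if "x \<in> X" for x using that SX by (metis Sup_upper)
  have "Sup X \<in> X" by (rule enat_Sup_in[OF Xne Xb])
  then have "enat n \<in> X" using SX by simp
  then obtain W where W: "edim W = enat n" "subspace W" "W \<subseteq> V" "\<forall>x\<in>W. x \<noteq> 0 \<longrightarrow> inner (T x) x < 0"
    unfolding X_def by auto
  define Y where "Y = {enat (card E) | E. finite E \<and> independent E \<and> E \<subseteq> W}"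
  have SY: "Sup Y = enat n" using W(1) unfolding edim_def Y_def by simp
  have "enat (card ({}::'a set)) \<in> Y" unfolding Y_def
    by (intro CollectI exI[of _ "{}"]) (simp add: independent_empty)
  then have Yne: "Y \<noteq> {}" by (metis empty_iff)
  have Yb: "y \<le> enat n" if "y \<in> Y" for y using that SY by (metis Sup_upper)
  have "Sup Y \<in> Y" by (rule enat_Sup_in[OF Yne Yb])
  then have "enat n \<in> Y" using SY by simp
  then obtain E where E: "enat (card E) = enat n" "finite E" "independent E" "E \<subseteq> W"
    unfolding Y_def by auto
  have spW: "span E \<subseteq> W" using W(2) E(4) by (simp add: span_minimal)
  show ?thesis
  proof (intro exI conjI)
    show "finite E" "independent E" by (fact E(2)) (fact E(3))
    show "card E = n" using E(1) by simp
    show "span E \<subseteq> V" using spW W(3) by (rule order_trans)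
    show "\<forall>x\<in>span E. x \<noteq> 0 \<longrightarrow> inner (T x) x < 0" using spW W(4) by (meson subsetD)
  qed
qed

lemma part4:
  fixes T :: "'a::{real_inner,complete_space} \<Rightarrow>\<^sub>L 'a"
  assumes TV: "(T, V) \<in> AA"
  shows "\<exists>e>0. \<forall>(T', V') \<in> AA. pdist (T, V) (T', V') < e \<longrightarrow> n_minus T V \<le> n_minus T' V'"
proof -
  have sV: "subspace V" and cV: "closed V" using TV by (auto simp: AA_def Gr_def)
  have ninf: "n_minus T V \<noteq> \<infinity>" using part2[OF TV] by blast
  then obtain n where nm: "n_minus T V = enat n" by (cases "n_minus T V") auto
  show ?thesis
  proof (cases "n = 0")
    case True
    then have "n_minus T V = 0" using nm by (simp add: zero_enat_def)
    then show ?thesis by (intro exI[of _ 1]) auto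
  next
    case False
    obtain E where E: "finite E" "independent E" "card E = n" "span E \<subseteq> V"
        "\<forall>x\<in>span E. x \<noteq> 0 \<longrightarrow> inner (T x) x < 0"
      using n_minus_attained[OF sV nm] by (elim exE conjE)
    have Ene: "E \<noteq> {}"
    proof
      assume "E = {}"
      then have "n = 0" using E(3) by simp
      then show False using False by simp
    qed
    obtain c where c: "c > 0" "\<forall>x\<in>span E. inner (T x) x \<le> - c * (norm x)\<^sup>2"
      using negdef_uniform[OF E(1) E(2) Ene E(5)] by (elim exE conjE)
    define t where "t = norm T"
    have t0: "t \<ge> 0" by (simp add: t_def)
    define \<delta> where "\<delta> = c / (1 + 2 * t)"
    have d0: "\<delta> > 0" unfolding \<delta>_def using c t0 by (intro divide_pos_pos) auto
    have main: "n_minus T V \<le> n_minus T' V'"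
      if T'V': "(T', V') \<in> AA" and small: "pdist (T, V) (T', V') < \<delta>" for T' V'
    proof -
      have sV': "subspace V'" and cV': "closed V'" using T'V' by (auto simp: AA_def Gr_def)
      define \<tau> where "\<tau> = norm (T - T')"
      define g where "g = gdist V V'"
      have tau0: "\<tau> \<ge> 0" by (simp add: \<tau>_def)
      have g0: "g \<ge> 0" unfolding g_def by (rule gdist_nonneg[OF sV cV sV' cV'])
      have gt: "\<tau> + g < \<delta>" using small by (simp add: pdist_def \<tau>_def g_def)
      have claim: "inner (T' (oproj V' x)) (oproj V' x) < 0" if x: "x \<in> span E" "x \<noteq> 0" for x
      proof -
        define y where "y = oproj V' x"
        define m where "m = norm x"
        have m0: "m > 0" using x by (simp add: m_def)
        have xV: "x \<in> V" using x E(4) by blast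
        have nyx: "norm (y - x) \<le> g * m"
        proof -
          have "norm (oproj V x - oproj V' x) \<le> g * m"
            unfolding g_def m_def by (rule gdist_bound[OF sV cV sV' cV'])
          then show ?thesis using oproj_id[OF sV cV xV] by (simp add: y_def norm_minus_commute)
        qed
        have ny: "norm y \<le> m" unfolding y_def m_def by (rule oproj_norm[OF sV' cV'])
        have q1: "inner (T x) x \<le> - c * m\<^sup>2" using c(2) x(1) by (simp add: m_def)
        have q2: "inner (T y) y \<le> inner (T x) x + 2 * t * g * m\<^sup>2"
        proof -
          have "\<bar>inner (T y) y - inner (T x) x\<bar> \<le> t * norm (y - x) * (norm x + norm y)"
            unfolding t_def by (rule quad_diff)
          also have "\<dots> \<le> t * (g * m) * (m + m)"
            using nyx ny t0 g0 by (intro mult_mono mult_left_mono add_mono) (auto simp: m_def)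
          also have "\<dots> = 2 * t * g * m\<^sup>2" by (simp add: power2_eq_square algebra_simps)
          finally show ?thesis by linarith
        qed
        have q3: "inner (T' y) y \<le> inner (T y) y + \<tau> * m\<^sup>2"
        proof -
          have "inner (T y) y - inner (T' y) y = inner ((T - T') y) y"
            by (simp add: blinfun.diff_left inner_diff_left)
          moreover have "\<bar>inner ((T - T') y) y\<bar> \<le> \<tau> * m\<^sup>2"
          proof -
            have "\<bar>inner ((T - T') y) y\<bar> \<le> norm ((T - T') y) * norm y" by (rule Cauchy_Schwarz_ineq2)
            also have "\<dots> \<le> (\<tau> * norm y) * norm y"
              unfolding \<tau>_def by (rule mult_right_mono[OF norm_blinfun]) simp
            also have "\<dots> \<le> (\<tau> * m) * m"
              using ny tau0 m0 norm_ge_zero[of y] by (intro mult_mono mult_left_mono) auto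
            finally show ?thesis by (simp add: power2_eq_square algebra_simps)
          qed
          ultimately show ?thesis by linarith
        qed
        have coef: "2 * t * g + \<tau> < c"
        proof -
          have "2 * t * g + \<tau> \<le> (1 + 2 * t) * (\<tau> + g)" using t0 g0 tau0 by (simp add: algebra_simps)
          also have "\<dots> < (1 + 2 * t) * \<delta>" using gt t0 by (intro mult_strict_left_mono) auto
          also have "\<dots> = c" using t0 by (simp add: \<delta>_def)
          finally show ?thesis .
        qed
        have "(2 * t * g + \<tau>) * m\<^sup>2 < c * m\<^sup>2" using coef m0 by (intro mult_strict_right_mono) auto
        then show ?thesis using q1 q2 q3 unfolding y_def[symmetric] by (simp add: algebra_simps)
      qed
      have lin: "linear (oproj V')" by (rule oproj_linear[OF sV' cV'])
      have inj: "inj_on (oproj V') (span E)"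
      proof -
        have "\<forall>x\<in>span E. oproj V' x = 0 \<longrightarrow> x = 0"
        proof (intro ballI impI)
          fix x assume "x \<in> span E" "oproj V' x = 0"
          show "x = 0"
          proof (rule ccontr)
            assume "x \<noteq> 0"
            then have "inner (T' (oproj V' x)) (oproj V' x) < 0" using claim \<open>x \<in> span E\<close> by blast
            then show False using \<open>oproj V' x = 0\<close> by simp
          qed
        qed
        then show ?thesis using linear_inj_on_iff_eq_0[OF lin subspace_span] by blast
      qed
      define E' where "E' = oproj V' ` E"
      have iE': "independent E'" unfolding E'_def by (rule linear_independent_injective_image[OF lin E(2) inj])
      have fE': "finite E'" using E(1) by (simp add: E'_def)
      have cE': "card E' = n"
        unfolding E'_def using card_image[OF inj_on_subset[OF inj span_superset]] E(3) by simp
      have spE': "span E' = oproj V' ` span E" unfolding E'_def by (rule linear_span_image[OF lin])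
      have sub: "span E' \<subseteq> V'" unfolding spE' using oproj_in[OF sV' cV'] by blast
      have nd: "\<forall>z\<in>span E'. z \<noteq> 0 \<longrightarrow> inner (T' z) z < 0"
      proof (intro ballI impI)
        fix z assume "z \<in> span E'" "z \<noteq> 0"
        then obtain x where x: "x \<in> span E" "z = oproj V' x" unfolding spE' by blast
        have "x \<noteq> 0" using x \<open>z \<noteq> 0\<close> linear_0[OF lin] by auto
        then show "inner (T' z) z < 0" using claim[OF x(1)] x(2) by simp
      qed
      have "enat n \<le> edim (span E')" using edim_ge[OF fE' iE' span_superset] cE' by simp
      also have "edim (span E') \<le> n_minus T' V'"
        unfolding n_minus_def by (rule Sup_upper, intro CollectI exI[of _ "span E'"]) (use subspace_span sub nd in simp)
      finally show ?thesis using nm by simp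
    qed
    have "\<forall>(T', V') \<in> AA. pdist (T, V) (T', V') < \<delta> \<longrightarrow> n_minus T V \<le> n_minus T' V'"
      using main by blast
    then show ?thesis using d0 by blast
  qed
qed

lemma radical_gen:
  fixes T :: "'a::real_inner \<Rightarrow>\<^sub>L 'a"
  assumes sa: "selfadjoint T" and sW: "subspace W" and nn: "\<forall>w\<in>W. inner (T w) w \<ge> 0"
    and x: "x \<in> W" and x0: "inner (T x) x = 0" and w: "w \<in> W"
  shows "inner (T x) w = 0"
proof -
  define a where "a = inner (T x) w"
  define b where "b = inner (T w) w"
  have b0: "b \<ge> 0" using nn w by (simp add: b_def)
  define t where "t = - a / (b + 1)"
  have "x + t *\<^sub>R w \<in> W" using sW x w by (simp add: subspace_add subspace_scale)
  then have nn1: "0 \<le> inner (T (x + t *\<^sub>R w)) (x + t *\<^sub>R w)" using nn by blast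
  have "inner (T w) x = inner w (T x)" using sa unfolding selfadjoint_def by blast
  then have Twx: "inner (T w) x = a" by (simp add: a_def inner_commute)
  have "inner (T (x + t *\<^sub>R w)) (x + t *\<^sub>R w) = 2 * t * a + t\<^sup>2 * b"
    using x0 Twx by (simp add: blinfun.add_right blinfun.scaleR_right inner_add_left inner_add_right
        a_def b_def power2_eq_square algebra_simps)
  then have h: "0 \<le> 2 * t * a + t\<^sup>2 * b" using nn1 by simp
  have h2: "0 \<le> (2 * t * a + t\<^sup>2 * b) * (b + 1)\<^sup>2" using h by simp
  have tq: "t * (b + 1) = - a" using b0 by (simp add: t_def)
  have eq2: "(2 * t * a + t\<^sup>2 * b) * (b + 1)\<^sup>2 = - 2 * a\<^sup>2 * (b + 1) + a\<^sup>2 * b"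
  proof -
    have "(2 * t * a + t\<^sup>2 * b) * (b + 1)\<^sup>2 = 2 * a * (t * (b+1)) * (b+1) + (t * (b+1))\<^sup>2 * b"
      by (simp add: power2_eq_square algebra_simps)
    also have "\<dots> = 2 * a * (- a) * (b+1) + (- a)\<^sup>2 * b" by (simp only: tq)
    also have "\<dots> = - 2 * a\<^sup>2 * (b + 1) + a\<^sup>2 * b" by (simp add: power2_eq_square)
    finally show ?thesis .
  qed
  have "0 \<le> - 2 * a\<^sup>2 * (b + 1) + a\<^sup>2 * b" using h2 eq2 by linarith
  then have "a\<^sup>2 * (b + 2) \<le> 0" by (simp add: algebra_simps)
  moreover have "b + 2 > 0" using b0 by simp
  ultimately have "a\<^sup>2 \<le> 0" by (simp add: mult_le_0_iff)
  then show ?thesis by (simp add: a_def)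
qed

context
  fixes T :: "'a::{real_inner,complete_space} \<Rightarrow>\<^sub>L 'a" and V EN EK
  assumes sa: "selfadjoint T" and sV: "subspace V" and cV: "closed V"
    and fEN: "finite EN" and iEN: "independent EN" and spEN: "span EN \<subseteq> V"
    and negN: "\<forall>x\<in>span EN. x \<noteq> 0 \<longrightarrow> inner (T x) x < 0"
    and maxN: "\<And>E. finite E \<Longrightarrow> independent E \<Longrightarrow> span E \<subseteq> V \<Longrightarrow>
        (\<forall>x\<in>span E. x \<noteq> 0 \<longrightarrow> inner (T x) x < 0) \<Longrightarrow> card E \<le> card EN"
    and fEK: "finite EK" and iEK: "independent EK" and spEK: "span EK = form_ker T V"
begin

definition SS where "SS = (\<lambda>e. oproj V (T e)) ` EN \<union> EK"
definition WW where "WW = {x\<in>V. \<forall>s\<in>SS. inner x s = 0}"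

lemma K_V: "\<kappa> \<in> span EK \<Longrightarrow> \<kappa> \<in> V"
  using spEK by (auto simp: form_ker_def)

lemma K_T: "\<kappa> \<in> span EK \<Longrightarrow> y \<in> V \<Longrightarrow> inner (T \<kappa>) y = 0"
  using spEK by (auto simp: form_ker_def)

lemma EN_V: "EN \<subseteq> V" using spEN span_superset by blast

lemma EK_V: "EK \<subseteq> V" using K_V span_superset by blast

lemma SS_fin: "finite SS" unfolding SS_def using fEN fEK by simp

lemma SS_V: "SS \<subseteq> V" unfolding SS_def using EK_V oproj_in[OF sV cV] by blast

lemma SS_card: "card SS \<le> card EN + card EK"
proof -
  have "card SS \<le> card ((\<lambda>e. oproj V (T e)) ` EN) + card EK" unfolding SS_def by (rule card_Un_le)
  also have "card ((\<lambda>e. oproj V (T e)) ` EN) \<le> card EN" using fEN by (rule card_image_le)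
  finally show ?thesis by simp
qed

lemma WW_V: "WW \<subseteq> V" unfolding WW_def by blast

lemma WW_sub: "subspace WW"
  unfolding subspace_def WW_def
  using sV by (auto simp: subspace_0 subspace_add subspace_scale inner_add_left)

lemma WW_closed: "closed WW"
proof -
  have "WW = V \<inter> (\<Inter>s\<in>SS. {x. inner s x = 0})" unfolding WW_def by (auto simp: inner_commute)
  then show ?thesis using cV by (simp add: closed_INT closed_hyperplane closed_Int)
qed

lemma W1: assumes x: "x \<in> WW" and m: "m \<in> span EN" shows "inner (T m) x = 0"
proof -
  have lin: "linear (\<lambda>m. inner (T m) x)"
    by (rule linearI) (simp_all add: blinfun.add_right blinfun.scaleR_right inner_add_left)
  have "inner (T e) x = 0" if e: "e \<in> EN" for e
  proof -
    have xV: "x \<in> V" using x WW_V by blast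
    have "inner (T e) x = inner (oproj V (T e)) x" using oproj_inner[OF sV cV xV] by simp
    also have "\<dots> = inner x (oproj V (T e))" by (simp add: inner_commute)
    also have "\<dots> = 0" using x e unfolding WW_def SS_def by blast
    finally show ?thesis .
  qed
  then show ?thesis using linear_eq_0_on_span[OF lin _ m] by blast
qed

lemma W2: assumes x: "x \<in> WW" and k: "\<kappa> \<in> span EK" shows "inner x \<kappa> = 0"
proof -
  have lin: "linear (\<lambda>k. inner x k)"
    by (rule linearI) (simp_all add: inner_add_right)
  have "inner x e = 0" if e: "e \<in> EK" for e using x e unfolding WW_def SS_def by blast
  then show ?thesis using linear_eq_0_on_span[OF lin _ k] by blast
qed

lemma stepA: assumes x: "x \<in> WW" shows "inner (T x) x \<ge> 0"
proof (rule ccontr)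
  assume neg: "\<not> inner (T x) x \<ge> 0"
  then have neg': "inner (T x) x < 0" by simp
  have xV: "x \<in> V" using x WW_V by blast
  have xn: "x \<notin> span EN"
  proof
    assume "x \<in> span EN"
    then have "inner (T x) x = 0" using W1[OF x] by blast
    then show False using neg' by simp
  qed
  define E' where "E' = insert x EN"
  have fE': "finite E'" using fEN by (simp add: E'_def)
  have iE': "independent E'" unfolding E'_def using xn iEN by (rule independent_insertI)
  have cE': "card E' = card EN + 1"
  proof -
    have "x \<notin> EN" using xn span_superset by blast
    then show ?thesis using fEN by (simp add: E'_def)
  qed
  have spE': "span E' \<subseteq> V"
  proof (rule span_minimal)
    show "E' \<subseteq> V" using xV EN_V by (simp add: E'_def)
  qed (rule sV)
  have nd: "\<forall>y\<in>span E'. y \<noteq> 0 \<longrightarrow> inner (T y) y < 0"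
  proof (intro ballI impI)
    fix y assume y: "y \<in> span E'" and y0: "y \<noteq> 0"
    obtain t where m: "y - t *\<^sub>R x \<in> span EN" using y unfolding E'_def span_breakdown_eq by blast
    define m where "m = y - t *\<^sub>R x"
    have mN: "m \<in> span EN" using m by (simp add: m_def)
    have ym: "y = m + t *\<^sub>R x" by (simp add: m_def)
    have a1: "inner (T m) x = 0" by (rule W1[OF x mN])
    have "inner (T x) m = inner x (T m)" using sa unfolding selfadjoint_def by blast
    then have a2: "inner (T x) m = 0" using a1 by (simp add: inner_commute)
    have eq: "inner (T y) y = inner (T m) m + t\<^sup>2 * inner (T x) x"
      unfolding ym using a1 a2
      by (simp add: blinfun.add_right blinfun.scaleR_right inner_add_left inner_add_right power2_eq_square)
    have mle: "inner (T m) m \<le> 0" using negN mN by (cases "m = 0") (auto intro: less_imp_le)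
    show "inner (T y) y < 0"
    proof (cases "t = 0")
      case True
      then have "m \<noteq> 0" using y0 ym by simp
      then have "inner (T m) m < 0" using negN mN by blast
      then show ?thesis using eq True by simp
    next
      case False
      then have "t\<^sup>2 * inner (T x) x < 0" using neg' by (simp add: mult_pos_neg)
      then show ?thesis using eq mle by simp
    qed
  qed
  have "card E' \<le> card EN" by (rule maxN[OF fE' iE' spE' nd])
  then show False using cE' by simp
qed

lemma NK_disj: "span EN \<inter> span EK \<subseteq> {0}"
proof
  fix z assume z: "z \<in> span EN \<inter> span EK"
  then have "inner (T z) z = 0" using K_T[of z z] K_V by blast
  then have "z = 0" using negN z by (metis IntD1 less_irrefl)
  then show "z \<in> {0}" by simp
qed

lemma U_W: assumes z: "z \<in> span (EN \<union> EK)" "z \<in> WW" shows "z = 0"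
proof -
  obtain m k where mk: "z = m + k" "m \<in> span EN" "k \<in> span EK" using z(1) by (auto simp: span_Un)
  have mV: "m \<in> V" using mk spEN by blast
  have "inner (T m) z = 0" by (rule W1[OF z(2) mk(2)])
  moreover have "inner (T z) m = inner z (T m)" using sa unfolding selfadjoint_def by blast
  ultimately have "inner (T z) m = 0" by (simp add: inner_commute)
  moreover have "inner (T z) m = inner (T m) m + inner (T k) m"
    by (simp add: mk(1) blinfun.add_right inner_add_left)
  moreover have "inner (T k) m = 0" by (rule K_T[OF mk(3) mV])
  ultimately have "inner (T m) m = 0" by simp
  then have m0: "m = 0" using negN mk(2) by (metis less_irrefl)
  then have zk: "z = k" using mk by simp
  have "inner z z = 0" using W2[OF z(2)] mk(3) zk by simp
  then show ?thesis by simp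
qed

lemma decomp: assumes y: "y \<in> V" shows "\<exists>u\<in>span (EN \<union> EK). y - u \<in> WW"
proof -
  define EU where "EU = EN \<union> EK"
  have iu: "independent EU \<and> EN \<inter> EK = {}"
    unfolding EU_def by (rule indep_union[OF fEK iEN iEK NK_disj])
  have fEU: "finite EU" using fEN fEK by (simp add: EU_def)
  have cEU: "card EU = card EN + card EK" using iu fEN fEK by (simp add: EU_def card_Un_disjoint)
  have UV: "span EU \<subseteq> V" unfolding EU_def using EN_V EK_V sV by (simp add: span_minimal)
  obtain S' where S': "S' \<subseteq> SS" "independent S'" "SS \<subseteq> span S'"
    by (rule maximal_independent_subset)
  have fS': "finite S'" using S'(1) SS_fin finite_subset by blast
  have cS': "card S' \<le> card EU" using card_mono[OF SS_fin S'(1)] SS_card cEU by simp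
  define L where "L y = (\<Sum>s\<in>S'. inner y s *\<^sub>R s)" for y
  have lL: "linear L"
    by (rule linearI) (simp_all add: L_def inner_add_left scaleR_add_left sum.distrib scaleR_sum_right)
  have L0: "y \<in> WW" if yV: "y \<in> V" and Ly: "L y = 0" for y
  proof -
    have "inner (L y) y = (\<Sum>s\<in>S'. (inner y s)\<^sup>2)"
      unfolding L_def inner_sum_left by (simp add: power2_eq_square inner_commute)
    then have "(\<Sum>s\<in>S'. (inner y s)\<^sup>2) = 0" using Ly by simp
    then have "\<forall>s\<in>S'. (inner y s)\<^sup>2 = 0" using sum_nonneg_eq_0_iff[OF fS', of "\<lambda>s. (inner y s)\<^sup>2"] by simp
    then have h: "\<forall>s\<in>S'. inner y s = 0" by simp
    have linf: "linear (\<lambda>s. inner y s)" by (rule linearI) (simp_all add: inner_add_right)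
    have "\<forall>s\<in>SS. inner y s = 0"
    proof
      fix s assume "s \<in> SS"
      then have "s \<in> span S'" using S'(3) by blast
      then show "inner y s = 0" using linear_eq_0_on_span[OF linf _ \<open>s \<in> span S'\<close>] h by blast
    qed
    then show ?thesis using yV unfolding WW_def by blast
  qed
  have inj: "inj_on L (span EU)"
  proof -
    have "\<forall>u\<in>span EU. L u = 0 \<longrightarrow> u = 0"
    proof (intro ballI impI)
      fix u assume u: "u \<in> span EU" "L u = 0"
      then have "u \<in> WW" using L0 UV by blast
      then show "u = 0" using U_W u(1) unfolding EU_def by blast
    qed
    then show ?thesis using linear_inj_on_iff_eq_0[OF lL subspace_span] by blast
  qed
  have iLE: "independent (L ` EU)" by (rule linear_independent_injective_image[OF lL conjunct1[OF iu] inj])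
  have cLE: "card (L ` EU) = card EU" using card_image[OF inj_on_subset[OF inj span_superset]] by simp
  have Lspan: "L z \<in> span S'" for z
    unfolding L_def by (rule span_sum, rule span_scale, rule span_base)
  have LEsub: "L ` EU \<subseteq> span S'" using Lspan by (simp add: image_subset_iff)
  have sp: "span S' \<subseteq> span (L ` EU)"
  proof
    fix z assume z: "z \<in> span S'"
    show "z \<in> span (L ` EU)"
    proof (rule ccontr)
      assume zn: "z \<notin> span (L ` EU)"
      have i1: "independent (insert z (L ` EU))" by (rule independent_insertI[OF zn iLE])
      have s1: "insert z (L ` EU) \<subseteq> span S'" using z LEsub by simp
      have b1: "finite (insert z (L ` EU)) \<and> card (insert z (L ` EU)) \<le> card S'"
        by (rule independent_span_bound[OF fS' i1 s1])
      have zn2: "z \<notin> L ` EU"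
      proof
        assume "z \<in> L ` EU"
        then have "z \<in> span (L ` EU)" by (rule span_base)
        then show False using zn by simp
      qed
      have fL: "finite (L ` EU)" using fEU by simp
      have "card (insert z (L ` EU)) = card (L ` EU) + 1" using fL zn2 by simp
      then show False using b1 cLE cS' by simp
    qed
  qed
  have "L y \<in> span (L ` EU)" by (rule subsetD[OF sp Lspan])
  then have "L y \<in> L ` span EU" using linear_span_image[OF lL] by simp
  then obtain u where u: "u \<in> span EU" "L y = L u" by auto
  have Ld: "L (y - u) = 0" using u(2) linear_diff[OF lL] by simp
  have uV: "u \<in> V" using UV u(1) by (rule subsetD)
  have dV: "y - u \<in> V" using y uV sV by (simp add: subspace_diff)
  have "y - u \<in> WW" by (rule L0[OF dV Ld])
  then show ?thesis using u(1) unfolding EU_def by (intro bexI[of _ u])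
qed

lemma stepB:
  assumes fB: "finite B0" and c0: "c0 > 0" and M0: "M0 \<ge> 0" and G: "GD T V {} B0 c0 M0"
  shows "\<exists>c>0. \<forall>x\<in>WW. c * (norm x)\<^sup>2 \<le> inner (T x) x"
proof (rule ccontr)
  assume nc: "\<not> (\<exists>c>0. \<forall>x\<in>WW. c * (norm x)\<^sup>2 \<le> inner (T x) x)"
  have nc': "\<exists>x\<in>WW. inner (T x) x < c * (norm x)\<^sup>2" if c: "c > 0" for c
  proof (rule ccontr)
    assume "\<not> (\<exists>x\<in>WW. inner (T x) x < c * (norm x)\<^sup>2)"
    then have "\<forall>x\<in>WW. c * (norm x)\<^sup>2 \<le> inner (T x) x" by (simp add: not_less)
    then show False using nc c by blast
  qed
  have ex: "\<exists>u. u \<in> WW \<and> norm u = 1 \<and> inner (T u) u < 1 / (real j + 1)" for j :: nat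
  proof -
    have pos: "1 / (real j + 1) > 0" by simp
    obtain x where x: "x \<in> WW" "inner (T x) x < 1 / (real j + 1) * (norm x)\<^sup>2"
      using nc'[OF pos] by blast
    have x0: "x \<noteq> 0" using x(2) by (cases "x = 0") auto
    define u where "u = (1 / norm x) *\<^sub>R x"
    have uW: "u \<in> WW" unfolding u_def using WW_sub x(1) by (rule subspace_scale)
    have un: "norm u = 1" using x0 by (simp add: u_def)
    have "inner (T u) u = inner (T x) x / (norm x)\<^sup>2"
      by (simp add: u_def blinfun.scaleR_right power2_eq_square)
    also have "\<dots> < 1 / (real j + 1)" using x(2) x0 by (simp add: divide_less_eq)
    finally show ?thesis using uW un by blast
  qed
  then obtain u where u: "\<And>j. u j \<in> WW \<and> norm (u j) = 1 \<and> inner (T (u j)) (u j) < 1 / (real j + 1)"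
    by metis
  define \<phi> where "\<phi> z = (\<Sum>b\<in>B0. inner z b *\<^sub>R b)" for z
  have l\<phi>: "linear \<phi>"
    by (rule linearI) (simp_all add: \<phi>_def inner_add_left scaleR_add_left sum.distrib scaleR_sum_right)
  define R where "R = (\<Sum>b\<in>B0. norm b)"
  define Cs where "Cs = {\<Sum>b\<in>B0. f b *\<^sub>R (\<lambda>b. b) b | f. \<forall>b\<in>B0. \<bar>f b\<bar> \<le> R}"
  have cCs: "compact Cs" unfolding Cs_def by (rule compact_box_sums[OF fB])
  have uC: "\<phi> (u j) \<in> Cs" for j
  proof -
    have "\<bar>inner (u j) b\<bar> \<le> R" if b: "b \<in> B0" for b
    proof -
      have "\<bar>inner (u j) b\<bar> \<le> norm (u j) * norm b" by (rule Cauchy_Schwarz_ineq2)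
      also have "\<dots> = norm b" using u[of j] by simp
      also have "\<dots> \<le> R" unfolding R_def by (rule member_le_sum[OF b _ fB]) simp
      finally show ?thesis .
    qed
    then show ?thesis unfolding Cs_def \<phi>_def by (intro CollectI exI[of _ "\<lambda>b. inner (u j) b"]) simp
  qed
  obtain l r where r: "strict_mono (r :: nat \<Rightarrow> nat)" and lr: "((\<lambda>j. \<phi> (u j)) \<circ> r) \<longlonglongrightarrow> l"
    using seq_compactE[OF compact_imp_seq_compact[OF cCs], of "\<lambda>j. \<phi> (u j)"] uC by blast
  define v where "v j = u (r j)" for j
  have vW: "v j \<in> WW" for j using u by (simp add: v_def)
  have vn: "norm (v j) = 1" for j using u by (simp add: v_def)
  have vq: "inner (T (v j)) (v j) < 1 / (real j + 1)" for j
  proof -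
    have "inner (T (v j)) (v j) < 1 / (real (r j) + 1)" using u by (simp add: v_def)
    also have "\<dots> \<le> 1 / (real j + 1)" using seq_suble[OF r, of j] by (simp add: frac_le)
    finally show ?thesis .
  qed
  have Cphi: "Cauchy (\<lambda>j. \<phi> (v j))"
  proof -
    have "(\<lambda>j. \<phi> (v j)) = (\<lambda>j. \<phi> (u j)) \<circ> r" by (simp add: v_def o_def)
    then show ?thesis using lr LIMSEQ_imp_Cauchy by metis
  qed
  have key: "c0 * (norm (v m - v n))\<^sup>2 \<le> 2 / (real m + 1) + 2 / (real n + 1) + 2 * M0 * norm (\<phi> (v m) - \<phi> (v n))"
    for m n
  proof -
    define d where "d = v m - v n"
    define s where "s = v m + v n"
    have dW: "d \<in> WW" unfolding d_def by (rule subspace_diff[OF WW_sub vW vW])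
    have sW: "s \<in> WW" unfolding s_def by (rule subspace_add[OF WW_sub vW vW])
    have dV: "d \<in> V" using dW WW_V by blast
    have g: "c0 * (norm d)\<^sup>2 - M0 * (\<Sum>b\<in>B0. (inner d b)\<^sup>2) \<le> inner (T d) d"
      using G dV unfolding GD_def by blast
    have cross: "inner (T (v n)) (v m) = inner (T (v m)) (v n)"
    proof -
      have "inner (T (v n)) (v m) = inner (v n) (T (v m))" using sa unfolding selfadjoint_def by blast
      then show ?thesis by (simp add: inner_commute)
    qed
    have par: "inner (T d) d + inner (T s) s = 2 * inner (T (v m)) (v m) + 2 * inner (T (v n)) (v n)"
      unfolding d_def s_def using cross
      by (simp add: blinfun.add_right blinfun.diff_right inner_add_left inner_add_right
          inner_diff_left inner_diff_right)
    have s0: "inner (T s) s \<ge> 0" by (rule stepA[OF sW])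
    have Td: "inner (T d) d \<le> 2 / (real m + 1) + 2 / (real n + 1)"
      using par s0 vq[of m] vq[of n] by linarith
    have nd: "norm d \<le> 2"
    proof -
      have "norm d \<le> norm (v m) + norm (v n)" unfolding d_def by (rule norm_triangle_ineq4)
      then show ?thesis using vn by simp
    qed
    have "(\<Sum>b\<in>B0. (inner d b)\<^sup>2) = inner (\<phi> d) d"
      unfolding \<phi>_def inner_sum_left by (simp add: power2_eq_square inner_commute)
    also have "\<dots> \<le> norm (\<phi> d) * norm d" by (rule norm_cauchy_schwarz)
    also have "\<dots> \<le> norm (\<phi> d) * 2" using nd by (rule mult_left_mono) simp
    also have "\<phi> d = \<phi> (v m) - \<phi> (v n)" unfolding d_def by (rule linear_diff[OF l\<phi>])
    finally have "M0 * (\<Sum>b\<in>B0. (inner d b)\<^sup>2) \<le> M0 * (norm (\<phi> (v m) - \<phi> (v n)) * 2)"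
      using M0 by (rule mult_left_mono)
    then show ?thesis using g Td unfolding d_def by (simp add: algebra_simps)
  qed
  have "Cauchy v"
  proof (rule metric_CauchyI)
    fix e :: real assume e: "e > 0"
    define \<eta> where "\<eta> = c0 * e\<^sup>2 / (4 * (M0 + 1))"
    have eta: "\<eta> > 0" using c0 e M0 by (simp add: \<eta>_def)
    obtain N1 where N1: "\<forall>m\<ge>N1. \<forall>n\<ge>N1. dist (\<phi> (v m)) (\<phi> (v n)) < \<eta>"
      using metric_CauchyD[OF Cphi eta] by blast
    have ce: "c0 * e\<^sup>2 > 0" using c0 e by simp
    obtain N2 :: nat where N2: "8 / (c0 * e\<^sup>2) < real N2" using reals_Archimedean2 by blast
    show "\<exists>M. \<forall>m\<ge>M. \<forall>n\<ge>M. dist (v m) (v n) < e"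
    proof (intro exI[of _ "max N1 N2"] allI impI)
      fix m n assume m: "m \<ge> max N1 N2" and n: "n \<ge> max N1 N2"
      have p1: "norm (\<phi> (v m) - \<phi> (v n)) < \<eta>" using N1 m n by (simp add: dist_norm)
      have N2pos: "real N2 > 0" using N2 ce by (smt (verit) divide_pos_pos)
      have a: "2 / (real m + 1) \<le> 2 / (real N2 + 1)" using m by (simp add: frac_le)
      have b: "2 / (real n + 1) \<le> 2 / (real N2 + 1)" using n by (simp add: frac_le)
      have c: "4 / (real N2 + 1) < c0 * e\<^sup>2 / 2"
      proof -
        have "8 < real N2 * (c0 * e\<^sup>2)" using N2 ce by (simp add: divide_less_eq)
        then have "8 < (real N2 + 1) * (c0 * e\<^sup>2)" using ce by (simp add: algebra_simps)
        then show ?thesis using N2pos by (simp add: field_simps)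
      qed
      have d: "2 * M0 * norm (\<phi> (v m) - \<phi> (v n)) \<le> c0 * e\<^sup>2 / 2"
      proof -
        have "2 * M0 * norm (\<phi> (v m) - \<phi> (v n)) \<le> 2 * M0 * \<eta>"
          using p1 M0 by (intro mult_left_mono) auto
        also have "\<dots> = c0 * e\<^sup>2 / 2 * (M0 / (M0 + 1))" using M0 by (simp add: \<eta>_def field_simps)
        also have "\<dots> \<le> c0 * e\<^sup>2 / 2 * 1" using M0 ce by (intro mult_left_mono) auto
        finally show ?thesis by simp
      qed
      have "c0 * (norm (v m - v n))\<^sup>2 < c0 * e\<^sup>2" using key[of m n] a b c d by linarith
      then have "(norm (v m - v n))\<^sup>2 < e\<^sup>2" using c0 by simp
      then have "norm (v m - v n) < e" using e by (simp add: power_less_imp_less_base)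
      then show "dist (v m) (v n) < e" by (simp add: dist_norm)
    qed
  qed
  then obtain x where vx: "v \<longlonglongrightarrow> x" using Cauchy_convergent_iff convergent_def by blast
  have xW: "x \<in> WW" using closed_sequentially[OF WW_closed] vW vx by blast
  have xV: "x \<in> V" using xW WW_V by blast
  have "(\<lambda>j. norm (v j)) \<longlonglongrightarrow> norm x" by (rule tendsto_norm[OF vx])
  moreover have "(\<lambda>j. norm (v j)) = (\<lambda>j. 1)" using vn by simp
  ultimately have xn: "norm x = 1" using LIMSEQ_unique tendsto_const by metis
  have qlim: "(\<lambda>j. inner (T (v j)) (v j)) \<longlonglongrightarrow> inner (T x) x"
    by (intro tendsto_inner bounded_linear.tendsto[OF blinfun.bounded_linear_right] vx)
  have "inner (T x) x \<le> 0"
    using qlim inv_n1 by (rule LIMSEQ_le) (use vq in \<open>auto intro: less_imp_le\<close>)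
  then have x0: "inner (T x) x = 0" using stepA[OF xW] by simp
  have rad: "inner (T x) w = 0" if "w \<in> WW" for w
    by (rule radical_gen[OF sa WW_sub _ xW x0 that]) (use stepA in blast)
  have lin: "linear (\<lambda>u. inner (T x) u)" by (rule linearI) (simp_all add: inner_add_right)
  have van: "inner (T x) e = 0" if e: "e \<in> EN \<union> EK" for e
  proof -
    have "inner (T x) e = inner x (T e)" using sa unfolding selfadjoint_def by blast
    also have "\<dots> = inner (T e) x" by (simp add: inner_commute)
    also have "\<dots> = 0"
    proof (cases "e \<in> EN")
      case True
      then show ?thesis using W1[OF xW] span_superset by blast
    next
      case False
      then have "e \<in> EK" using e by blast
      then show ?thesis using K_T[OF _ xV] span_superset by blast
    qed
    finally show ?thesis .
  qed
  have "\<forall>y\<in>V. inner (T x) y = 0"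
  proof
    fix y assume y: "y \<in> V"
    obtain w where w: "w \<in> span (EN \<union> EK)" "y - w \<in> WW" using decomp[OF y] by blast
    have "inner (T x) (y - w) = 0" by (rule rad[OF w(2)])
    moreover have "inner (T x) w = 0" using linear_eq_0_on_span[OF lin _ w(1)] van by blast
    ultimately show "inner (T x) y = 0" by (simp add: inner_diff_right)
  qed
  then have "x \<in> form_ker T V" using xV by (simp add: form_ker_def)
  then have "x \<in> span EK" using spEK by simp
  then have "inner x x = 0" by (rule W2[OF xW])
  then have "x = 0" by simp
  then show False using xn by simp
qed

lemma coercive_S:
  assumes fB: "finite B0" and c0: "c0 > 0" and M0: "M0 \<ge> 0" and G: "GD T V {} B0 c0 M0"
  shows "\<exists>S c. finite S \<and> S \<subseteq> V \<and> card S \<le> card EN + card EK \<and> c > 0 \<and> GD T V S {} c 0"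
proof -
  obtain c where c: "c > 0" "\<forall>x\<in>WW. c * (norm x)\<^sup>2 \<le> inner (T x) x"
    using stepB[OF fB c0 M0 G] by blast
  have "GD T V SS {} c 0"
    unfolding GD_def
  proof (intro ballI impI)
    fix y assume "y \<in> V" "\<forall>s\<in>SS. inner y s = 0"
    then have "y \<in> WW" unfolding WW_def by blast
    then show "c * (norm y)\<^sup>2 - 0 * (\<Sum>b\<in>{}. (inner y b)\<^sup>2) \<le> inner (T y) y" using c by simp
  qed
  then show ?thesis using SS_fin SS_V SS_card c(1) by blast
qed

end

lemma edim_attained:
  fixes W :: "'a::real_vector set"
  assumes sW: "subspace W" and ed: "edim W = enat k"
  shows "\<exists>E. finite E \<and> independent E \<and> card E = k \<and> E \<subseteq> W \<and> W \<subseteq> span E"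
proof -
  define Y where "Y = {enat (card E) | E. finite E \<and> independent E \<and> E \<subseteq> W}"
  have SY: "Sup Y = enat k" using ed unfolding edim_def Y_def by simp
  have "enat (card ({}::'a set)) \<in> Y" unfolding Y_def
    by (intro CollectI exI[of _ "{}"]) (simp add: independent_empty)
  then have Yne: "Y \<noteq> {}" by (metis empty_iff)
  have Yb: "y \<le> enat k" if "y \<in> Y" for y using that SY by (metis Sup_upper)
  have "Sup Y \<in> Y" by (rule enat_Sup_in[OF Yne Yb])
  then have "enat k \<in> Y" using SY by simp
  then obtain E where E: "enat (card E) = enat k" "finite E" "independent E" "E \<subseteq> W"
    unfolding Y_def by auto
  have "W \<subseteq> span E"
  proof
    fix x assume x: "x \<in> W"
    show "x \<in> span E"
    proof (rule ccontr)
      assume xn: "x \<notin> span E"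
      have i: "independent (insert x E)" by (rule independent_insertI[OF xn E(3)])
      have f: "finite (insert x E)" using E(2) by simp
      have s: "insert x E \<subseteq> W" using x E(4) by simp
      have "x \<notin> E" using xn span_superset by blast
      then have c: "card (insert x E) = k + 1" using E(1,2) by simp
      have "enat (card (insert x E)) \<le> edim W" by (rule edim_ge[OF f i s])
      then show False using c ed by simp
    qed
  qed
  then show ?thesis using E by (intro exI[of _ E]) simp
qed

lemma part1:
  fixes T :: "'a::{real_inner,complete_space} \<Rightarrow>\<^sub>L 'a"
  assumes TV: "(T, V) \<in> AA"
  shows "\<exists>e>0. \<forall>q \<in> Bs \<times> Gr. pdist (T, V) q < e \<longrightarrow> q \<in> AA"
proof -
  have sV: "subspace V" and cV: "closed V" using TV by (auto simp: AA_def Gr_def)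
  obtain B c M where B: "finite B" "c > 0" "M \<ge> 0" "GD T V {} B c M" using AA_GD[OF TV] by blast
  obtain \<delta> where d: "\<delta> > 0" and dd: "\<forall>T' V'. subspace V' \<longrightarrow> closed V' \<longrightarrow> norm (T - T') + gdist V V' < \<delta> \<longrightarrow>
           GD T' V' {} B (c/2) (2*M)"
    using perturb[OF sV cV _ B(1) B(2) B(3) B(4)] by blast
  have "q \<in> AA" if q: "q \<in> Bs \<times> Gr" and small: "pdist (T, V) q < \<delta>" for q
  proof -
    obtain T' V' where qq: "q = (T', V')" by (cases q)
    have sa': "selfadjoint T'" and sV': "subspace V'" and cV': "closed V'"
      using q unfolding qq by (auto simp: Bs_def Gr_def)
    have "norm (T - T') + gdist V V' < \<delta>" using small unfolding qq by (simp add: pdist_def)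
    then have "GD T' V' {} B (c/2) (2*M)" using dd sV' cV' by blast
    moreover have "c / 2 > 0" "2 * M \<ge> 0" using B by auto
    ultimately have "ess_pos T' V'" using GD_ess_pos[OF sV' cV' sa' B(1)] by blast
    then show ?thesis using sa' sV' cV' unfolding qq by (simp add: AA_def Bs_def Gr_def)
  qed
  then show ?thesis using d by blast
qed

lemma part3:
  fixes T :: "'a::{real_inner,complete_space} \<Rightarrow>\<^sub>L 'a"
  assumes TV: "(T, V) \<in> AA"
  shows "\<exists>e>0. \<forall>(T', V') \<in> AA. pdist (T, V) (T', V') < e \<longrightarrow>
            n_minus T' V' + edim (form_ker T' V') \<le> n_minus T V + edim (form_ker T V)"
proof -
  have sa: "selfadjoint T" and sV: "subspace V" and cV: "closed V"
    using TV by (auto simp: AA_def Bs_def Gr_def)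
  obtain B c M where B: "finite B" "c > 0" "M \<ge> 0" "GD T V {} B c M" using AA_GD[OF TV] by blast
  have p2: "n_minus T V \<noteq> \<infinity> \<and> edim (form_ker T V) \<noteq> \<infinity>" by (rule part2[OF TV])
  then obtain n where nm: "n_minus T V = enat n" by (cases "n_minus T V") auto
  obtain k where km: "edim (form_ker T V) = enat k" using p2 by (cases "edim (form_ker T V)") auto
  obtain EN where EN: "finite EN" "independent EN" "card EN = n" "span EN \<subseteq> V"
      "\<forall>x\<in>span EN. x \<noteq> 0 \<longrightarrow> inner (T x) x < 0"
    using n_minus_attained[OF sV nm] by (elim exE conjE)
  have maxN: "card E \<le> card EN"
    if E: "finite E" "independent E" "span E \<subseteq> V" "\<forall>x\<in>span E. x \<noteq> 0 \<longrightarrow> inner (T x) x < 0" for E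
  proof -
    have "enat (card E) \<le> edim (span E)" by (rule edim_ge[OF E(1) E(2) span_superset])
    also have "edim (span E) \<le> n_minus T V"
      unfolding n_minus_def by (rule Sup_upper, intro CollectI exI[of _ "span E"]) (use subspace_span E in simp)
    finally show ?thesis using nm EN(3) by simp
  qed
  have sK: "subspace (form_ker T V)" by (rule form_ker_subspace[OF sV])
  obtain EK where EK: "finite EK" "independent EK" "card EK = k" "EK \<subseteq> form_ker T V"
      "form_ker T V \<subseteq> span EK"
    using edim_attained[OF sK km] by (elim exE conjE)
  have spEK: "span EK = form_ker T V"
  proof
    show "span EK \<subseteq> form_ker T V" using sK EK(4) by (simp add: span_minimal)
    show "form_ker T V \<subseteq> span EK" by (rule EK(5))
  qed
  have "\<exists>S c. finite S \<and> S \<subseteq> V \<and> card S \<le> card EN + card EK \<and> c > 0 \<and> GD T V S {} c 0"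
    by (rule coercive_S[OF sa sV cV EN(1) EN(2) EN(4) EN(5) _ EK(1) EK(2) spEK B(1) B(2) B(3) B(4)]) (fact maxN)
  then obtain S c' where S: "finite S" "S \<subseteq> V" "card S \<le> card EN + card EK" "c' > 0" "GD T V S {} c' 0"
    by (elim exE conjE)
  obtain \<delta> where d: "\<delta> > 0" and dd: "\<forall>T' V'. subspace V' \<longrightarrow> closed V' \<longrightarrow> norm (T - T') + gdist V V' < \<delta> \<longrightarrow>
           GD T' V' S {} (c'/2) (2*0)"
    using perturb[OF sV cV S(2) _ S(4) _ S(5)] by auto
  have main: "n_minus T' V' + edim (form_ker T' V') \<le> n_minus T V + edim (form_ker T V)"
    if T'V': "(T', V') \<in> AA" and small: "pdist (T, V) (T', V') < \<delta>" for T' V'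
  proof -
    have sa': "selfadjoint T'" and sV': "subspace V'" and cV': "closed V'"
      using T'V' by (auto simp: AA_def Bs_def Gr_def)
    have "norm (T - T') + gdist V V' < \<delta>" using small by (simp add: pdist_def)
    then have G': "GD T' V' S {} (c'/2) (2*0)" using dd sV' cV' by blast
    have pos: "\<forall>x\<in>V'. (\<forall>s\<in>S. inner x s = 0) \<longrightarrow> x \<noteq> 0 \<longrightarrow> inner (T' x) x > 0"
    proof (intro ballI impI)
      fix x assume x: "x \<in> V'" "\<forall>s\<in>S. inner x s = 0" "x \<noteq> 0"
      have "c'/2 * (norm x)\<^sup>2 - 2 * 0 * (\<Sum>b\<in>{}. (inner x b)\<^sup>2) \<le> inner (T' x) x"
        using G' x unfolding GD_def by blast
      moreover have "c'/2 * (norm x)\<^sup>2 > 0" using x S(4) by simp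
      ultimately show "inner (T' x) x > 0" by simp
    qed
    have "n_minus T' V' + edim (form_ker T' V') \<le> enat (card S)"
      by (rule count_bound[OF sa' sV' S(1) pos])
    also have "\<dots> \<le> enat (n + k)" using S(3) EN(3) EK(3) by simp
    also have "enat (n + k) = n_minus T V + edim (form_ker T V)" using nm km by simp
    finally show ?thesis .
  qed
  have "\<forall>(T', V') \<in> AA. pdist (T, V) (T', V') < \<delta> \<longrightarrow>
            n_minus T' V' + edim (form_ker T' V') \<le> n_minus T V + edim (form_ker T V)"
    using main by blast
  then show ?thesis using d by blast
qed

theorem mainTheorem15:
  fixes H :: "'a::{real_inner, complete_space} itself"
  shows "(\<forall>p \<in> (AA :: (('a \<Rightarrow>\<^sub>L 'a) \<times> 'a set) set).
            \<exists>e>0. \<forall>q \<in> Bs \<times> Gr. pdist p q < e \<longrightarrow> q \<in> AA)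
    \<and> (\<forall>(T, V) \<in> (AA :: (('a \<Rightarrow>\<^sub>L 'a) \<times> 'a set) set).
            n_minus T V \<noteq> \<infinity> \<and> edim (form_ker T V) \<noteq> \<infinity>)
    \<and> (\<forall>(T, V) \<in> (AA :: (('a \<Rightarrow>\<^sub>L 'a) \<times> 'a set) set). \<exists>e>0. \<forall>(T', V') \<in> AA.
            pdist (T, V) (T', V') < e \<longrightarrow>
            n_minus T' V' + edim (form_ker T' V') \<le> n_minus T V + edim (form_ker T V))
    \<and> (\<forall>(T, V) \<in> (AA :: (('a \<Rightarrow>\<^sub>L 'a) \<times> 'a set) set). \<exists>e>0. \<forall>(T', V') \<in> AA.
            pdist (T, V) (T', V') < e \<longrightarrow> n_minus T V \<le> n_minus T' V')"
proof (intro conjI)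
  show "\<forall>p \<in> (AA :: (('a \<Rightarrow>\<^sub>L 'a) \<times> 'a set) set). \<exists>e>0. \<forall>q \<in> Bs \<times> Gr. pdist p q < e \<longrightarrow> q \<in> AA"
  proof
    fix p :: "('a \<Rightarrow>\<^sub>L 'a) \<times> 'a set" assume p: "p \<in> AA"
    obtain T V where pp: "p = (T, V)" by (cases p)
    show "\<exists>e>0. \<forall>q \<in> Bs \<times> Gr. pdist p q < e \<longrightarrow> q \<in> AA" using part1[of T V] p unfolding pp by blast
  qed
  show "\<forall>(T, V) \<in> (AA :: (('a \<Rightarrow>\<^sub>L 'a) \<times> 'a set) set). n_minus T V \<noteq> \<infinity> \<and> edim (form_ker T V) \<noteq> \<infinity>"
    using part2 by blast
  show "\<forall>(T, V) \<in> (AA :: (('a \<Rightarrow>\<^sub>L 'a) \<times> 'a set) set). \<exists>e>0. \<forall>(T', V') \<in> AA.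
            pdist (T, V) (T', V') < e \<longrightarrow>
            n_minus T' V' + edim (form_ker T' V') \<le> n_minus T V + edim (form_ker T V)"
    using part3 by blast
  show "\<forall>(T, V) \<in> (AA :: (('a \<Rightarrow>\<^sub>L 'a) \<times> 'a set) set). \<exists>e>0. \<forall>(T', V') \<in> AA.
            pdist (T, V) (T', V') < e \<longrightarrow> n_minus T V \<le> n_minus T' V'"
    using part4 by blast
qed

end
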